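(* Let $(E,C)$ be a finite bipartite separated graph and let $A_{\mathrm{DE}}\subseteq E^1\cup(E^1)^{-1}$ be the set of dead ends. Then, for $v\in E^0$, the clopen set $\Omega(E,C)_v$ contains an isolated point if and only if $v\in V(A_{\mathrm{DE}})$. Consequently $\Omega(E,C)$ is a Cantor space if and only if $V(A_{\mathrm{DE}})=\emptyset$.
   Context: Separated graph $(E,C)$: $E=(E^0,E^1,r,s)$, $C=\bigsqcup_vC_v$ with $C_v$ a partition of $r^{-1}(v)$ into non-empty sets; $X_e$ is the element of $C$ containing $e$. Finite bipartite: $E$ finite, $E^0=E^{0,0}\sqcup E^{0,1}$, $s(E^1)=E^{0,1}$, $r(E^1)=E^{0,0}$. Admissible paths: words $\sigma_m\cdots\sigma_1$ in $E^1\sqcup(E^1)^{-1}$ forming a path in the double graph (where $e^{-1}$ goes from $r(e)$ to $s(e)$; paths are read right to left) such that no subword $ef^{-1}$ has $e=f$ and no subword $e^{-1}f$ has $X_e=X_f$; vertices are the trivial admissible paths. Range and source of a path are taken in the double graph. A choice path is an admissible path $\alpha=e\beta$ with $e\in E^1$ such that there exists $X\in C_{r(e)}$, $X\ne X_e$, with $|X|\ge2$. An element $\sigma\in E^1\cup(E^1)^{-1}$ is a dead end if no choice path has $\sigma$ as its initial (rightmost) letter. A set $A\subseteq E^1\cup(E^1)^{-1}$ is path closed if for every admissible path $\alpha$ whose initial letter lies in $A$, its terminal (leftmost) letter lies in $A$. $A$ is $\partial$-closed if: (1) whenever $v\in E^{0,1}$, $|s^{-1}(v)|\ge2$, $e\in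 s^{-1}(v)$ and $s^{-1}(v)\setminus\{e\}\subseteq A$, then $e^{-1}\in A$; (2) whenever $v\in E^{0,0}$, $|C_v|\ge2$, $X\in C_v$ and $Y^{-1}\cap A\ne\emptyset$ for every $Y\in C_v\setminus\{X\}$, then $X\subseteq A$. $\overline A$ is the smallest $\partial$-closed set containing $A$, and $V(A)=\{v\in E^{0,0}:X^{-1}\cap\overline A\ne\emptyset\ \forall X\in C_v\}\cup\{v\in E^{0,1}:s^{-1}(v)\subseteq\overline A\}$. Configuration space: $\mathbb F$ = free group on $E^1$; $\Omega(E,C)$ = set of $\xi\subseteq\mathbb F$ with $1\in\xi$, right-convex (if a reduced word $e_m^{\varepsilon_m}\cdots e_1^{\varepsilon_1}\in\xi$ then $e_k^{\varepsilon_k}\cdots e_1^{\varepsilon_1}\in\xi$ for $k<m$), and such that for every $\alpha\in\xi$ the set $\xi_\alpha=\{\sigma\in E^1\sqcup(E^1)^{-1}:\sigma\alpha\in\xi\}$ equals $s^{-1}(v)$ for some $v\in E^{0,1}$ or $\{e_X^{-1}:X\in C_v\}$ for some $v\in E^{0,0}$ and $e_X\in X$; topology from $\{0,1\}^{\mathbb F}$. For $v\in E^{0,1}$, $\Omega(E,C)_v=\{\xi:e\in\xi\}$ for any $e\in s^{-1}(v)$; for $v\in E^{0,0}$, $\Omega(E,C)_v=\{\xi:e^{-1}\in\xi\text{ for some }e\in X\}$ for any $X\in C_v$. *)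

theory Defs
  imports "HOL-Analysis.Analysis"
begin

(* Letters of E^1 \<sqcup> (E^1)^{-1}: Pos e = e, Neg e = e^{-1}. *)
datatype 'e letter = Pos 'e | Neg 'e

fun linv :: "'e letter \<Rightarrow> 'e letter" where
  "linv (Pos e) = Neg e" | "linv (Neg e) = Pos e"

definition letters :: "'e set \<Rightarrow> 'e letter set" where
  "letters E1 = Pos ` E1 \<union> Neg ` E1"

fun lsrc :: "('e \<Rightarrow> 'v) \<Rightarrow> ('e \<Rightarrow> 'v) \<Rightarrow> 'e letter \<Rightarrow> 'v" where
  "lsrc r s (Pos e) = s e" | "lsrc r s (Neg e) = r e"
fun lrng :: "('e \<Rightarrow> 'v) \<Rightarrow> ('e \<Rightarrow> 'v) \<Rightarrow> 'e letter \<Rightarrow> 'v" where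
  "lrng r s (Pos e) = r e" | "lrng r s (Neg e) = s e"

(* Finite bipartite separated graph; E^0 = E00 \<union> E01, C a set of classes *)
definition fin_bip_sep_graph ::
  "'v set \<Rightarrow> 'v set \<Rightarrow> 'e set \<Rightarrow> ('e \<Rightarrow> 'v) \<Rightarrow> ('e \<Rightarrow> 'v) \<Rightarrow> 'e set set \<Rightarrow> bool" where
  "fin_bip_sep_graph E00 E01 E1 r s C \<longleftrightarrow>
     finite E00 \<and> finite E01 \<and> finite E1 \<and> E00 \<inter> E01 = {} \<and>
     s ` E1 = E01 \<and> r ` E1 = E00 \<and>
     (\<forall>X\<in>C. X \<noteq> {} \<and> X \<subseteq> E1 \<and> (\<forall>e\<in>X. \<forall>f\<in>X. r e = r f)) \<and>
     (\<forall>e\<in>E1. \<exists>!X. X \<in> C \<and> e \<in> X)"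

definition Cv :: "('e \<Rightarrow> 'v) \<Rightarrow> 'e set set \<Rightarrow> 'v \<Rightarrow> 'e set set" where
  "Cv r C v = {X \<in> C. \<forall>e\<in>X. r e = v}"

definition cls :: "'e set set \<Rightarrow> 'e \<Rightarrow> 'e set" where
  "cls C e = (THE X. X \<in> C \<and> e \<in> X)"

(* A nonempty word \<sigma>_m ... \<sigma>_1 is represented by the list [\<sigma>_m, ..., \<sigma>_1];
   so the initial (rightmost) letter is the last list element, the terminal
   (leftmost) letter is the head. *)
definition adm_word ::
  "'e set \<Rightarrow> ('e \<Rightarrow> 'v) \<Rightarrow> ('e \<Rightarrow> 'v) \<Rightarrow> 'e set set \<Rightarrow> 'e letter list \<Rightarrow> bool" where
  "adm_word E1 r s C w \<longleftrightarrow> w \<noteq> [] \<and> set w \<subseteq> letters E1 \<and>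
     (\<forall>i. Suc i < length w \<longrightarrow>
        lsrc r s (w ! i) = lrng r s (w ! Suc i) \<and>
        \<not> (\<exists>e. w ! i = Pos e \<and> w ! Suc i = Neg e) \<and>
        \<not> (\<exists>e f. w ! i = Neg e \<and> w ! Suc i = Pos f \<and> cls C e = cls C f))"

definition choice_path ::
  "'e set \<Rightarrow> ('e \<Rightarrow> 'v) \<Rightarrow> ('e \<Rightarrow> 'v) \<Rightarrow> 'e set set \<Rightarrow> 'e letter list \<Rightarrow> bool" where
  "choice_path E1 r s C w \<longleftrightarrow> adm_word E1 r s C w \<and>
     (\<exists>e\<in>E1. hd w = Pos e \<and> (\<exists>X\<in>Cv r C (r e). X \<noteq> cls C e \<and> card X \<ge> 2))"

definition dead_ends ::
  "'e set \<Rightarrow> ('e \<Rightarrow> 'v) \<Rightarrow> ('e \<Rightarrow> 'v) \<Rightarrow> 'e set set \<Rightarrow> 'e letter set" where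
  "dead_ends E1 r s C = {\<sigma> \<in> letters E1. \<not> (\<exists>w. choice_path E1 r s C w \<and> last w = \<sigma>)}"

definition dclosed ::
  "'v set \<Rightarrow> 'v set \<Rightarrow> 'e set \<Rightarrow> ('e \<Rightarrow> 'v) \<Rightarrow> ('e \<Rightarrow> 'v) \<Rightarrow> 'e set set \<Rightarrow> 'e letter set \<Rightarrow> bool" where
  "dclosed E00 E01 E1 r s C A \<longleftrightarrow>
     (\<forall>v\<in>E01. card {e\<in>E1. s e = v} \<ge> 2 \<longrightarrow>
        (\<forall>e\<in>E1. s e = v \<longrightarrow> Pos ` ({f\<in>E1. s f = v} - {e}) \<subseteq> A \<longrightarrow> Neg e \<in> A)) \<and>
     (\<forall>v\<in>E00. card (Cv r C v) \<ge> 2 \<longrightarrow>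
        (\<forall>X\<in>Cv r C v. (\<forall>Y\<in>Cv r C v - {X}. Neg ` Y \<inter> A \<noteq> {}) \<longrightarrow> Pos ` X \<subseteq> A))"

definition dclosure ::
  "'v set \<Rightarrow> 'v set \<Rightarrow> 'e set \<Rightarrow> ('e \<Rightarrow> 'v) \<Rightarrow> ('e \<Rightarrow> 'v) \<Rightarrow> 'e set set \<Rightarrow> 'e letter set \<Rightarrow> 'e letter set" where
  "dclosure E00 E01 E1 r s C A =
     \<Inter>{B. B \<subseteq> letters E1 \<and> A \<subseteq> B \<and> dclosed E00 E01 E1 r s C B}"

definition Vset ::
  "'v set \<Rightarrow> 'v set \<Rightarrow> 'e set \<Rightarrow> ('e \<Rightarrow> 'v) \<Rightarrow> ('e \<Rightarrow> 'v) \<Rightarrow> 'e set set \<Rightarrow> 'e letter set \<Rightarrow> 'v set" where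
  "Vset E00 E01 E1 r s C A =
     {v\<in>E00. \<forall>X\<in>Cv r C v. Neg ` X \<inter> dclosure E00 E01 E1 r s C A \<noteq> {}} \<union>
     {v\<in>E01. Pos ` {e\<in>E1. s e = v} \<subseteq> dclosure E00 E01 E1 r s C A}"

(* Free group on E1: reduced words (same list convention) *)
definition reduced :: "'e set \<Rightarrow> 'e letter list \<Rightarrow> bool" where
  "reduced E1 w \<longleftrightarrow> set w \<subseteq> letters E1 \<and>
     (\<forall>i. Suc i < length w \<longrightarrow> w ! Suc i \<noteq> linv (w ! i))"

definition Fgrp :: "'e set \<Rightarrow> 'e letter list set" where
  "Fgrp E1 = {w. reduced E1 w}"

definition gmult :: "'e letter \<Rightarrow> 'e letter list \<Rightarrow> 'e letter list" where
  "gmult \<sigma> \<alpha> = (case \<alpha> of [] \<Rightarrow> [\<sigma>] | \<tau> # \<beta> \<Rightarrow> if \<tau> = linv \<sigma> then \<beta> else \<sigma> # \<alpha>)"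

definition xi_at :: "'e set \<Rightarrow> 'e letter list set \<Rightarrow> 'e letter list \<Rightarrow> 'e letter set" where
  "xi_at E1 \<xi> \<alpha> = {\<sigma> \<in> letters E1. gmult \<sigma> \<alpha> \<in> \<xi>}"

definition Omega ::
  "'v set \<Rightarrow> 'v set \<Rightarrow> 'e set \<Rightarrow> ('e \<Rightarrow> 'v) \<Rightarrow> ('e \<Rightarrow> 'v) \<Rightarrow> 'e set set \<Rightarrow> 'e letter list set set" where
  "Omega E00 E01 E1 r s C = {\<xi>. \<xi> \<subseteq> Fgrp E1 \<and> [] \<in> \<xi> \<and>
     (\<forall>\<alpha>\<in>\<xi>. \<forall>k. drop k \<alpha> \<in> \<xi>) \<and>
     (\<forall>\<alpha>\<in>\<xi>.
        (\<exists>v\<in>E01. xi_at E1 \<xi> \<alpha> = Pos ` {e\<in>E1. s e = v}) \<or>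
        (\<exists>v\<in>E00. \<exists>f. (\<forall>X\<in>Cv r C v. f X \<in> X) \<and>
            xi_at E1 \<xi> \<alpha> = {Neg (f X) | X. X \<in> Cv r C v}))}"

definition Omega_v ::
  "'v set \<Rightarrow> 'v set \<Rightarrow> 'e set \<Rightarrow> ('e \<Rightarrow> 'v) \<Rightarrow> ('e \<Rightarrow> 'v) \<Rightarrow> 'e set set \<Rightarrow> 'v \<Rightarrow> 'e letter list set set" where
  "Omega_v E00 E01 E1 r s C v =
     (if v \<in> E01 then {\<xi> \<in> Omega E00 E01 E1 r s C. \<exists>e\<in>E1. s e = v \<and> [Pos e] \<in> \<xi>}
      else {\<xi> \<in> Omega E00 E01 E1 r s C. \<exists>X\<in>Cv r C v. \<exists>e\<in>X. [Neg e] \<in> \<xi>})"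

(* topology on subsets of words, induced from {0,1}^(words) via characteristic functions *)
definition set_top :: "'w set topology" where
  "set_top = pullback_topology UNIV (\<lambda>\<xi> w. w \<in> \<xi>)
              (product_topology (\<lambda>_. discrete_topology (UNIV :: bool set)) UNIV)"

definition cantor_top :: "(nat \<Rightarrow> bool) topology" where
  "cantor_top = product_topology (\<lambda>_. discrete_topology (UNIV :: bool set)) UNIV"

end

theory Submission
  imports Defs
begin

abbreviation "PB \<equiv> product_topology (\<lambda>_. discrete_topology (UNIV::bool set)) UNIV"

lemma prod_open_iff:
  "openin (PB :: ('i \<Rightarrow> bool) topology) U \<longleftrightarrow> (\<forall>x\<in>U. \<exists>F. finite F \<and> {y. \<forall>i\<in>F. y i = x i} \<subseteq> U)"
proof
  assume "openin PB U"
  then have H: "\<forall>x\<in>U. \<exists>V. finite {i \<in> UNIV. V i \<noteq> topspace (discrete_topology UNIV)} \<and>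
                 (\<forall>i \<in> UNIV. openin (discrete_topology UNIV) (V i)) \<and> x \<in> Pi\<^sub>E UNIV V \<and> Pi\<^sub>E UNIV V \<subseteq> U"
    by (rule openin_product_topology_alt[THEN iffD1])
  show "\<forall>x\<in>U. \<exists>F. finite F \<and> {y. \<forall>i\<in>F. y i = x i} \<subseteq> U"
  proof
    fix x assume "x \<in> U"
    then obtain V where V: "finite {i \<in> UNIV. V i \<noteq> topspace (discrete_topology UNIV)}" "x \<in> Pi\<^sub>E UNIV V" "Pi\<^sub>E UNIV V \<subseteq> U"
      using H by metis
    have "{y. \<forall>i\<in>{i. V i \<noteq> UNIV}. y i = x i} \<subseteq> Pi\<^sub>E UNIV V"
    proof
      fix y assume "y \<in> {y. \<forall>i\<in>{i. V i \<noteq> UNIV}. y i = x i}"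
      then have A: "\<forall>i. V i \<noteq> UNIV \<longrightarrow> y i = x i" by simp
      have "\<forall>i. y i \<in> V i"
      proof
        fix i
        show "y i \<in> V i"
        proof (cases "V i = UNIV")
          case False then show ?thesis using A V(2) by (auto simp: PiE_iff)
        qed simp
      qed
      then show "y \<in> Pi\<^sub>E UNIV V" by (simp add: PiE_iff)
    qed
    moreover have "finite {i. V i \<noteq> UNIV}" using V(1) by simp
    ultimately show "\<exists>F. finite F \<and> {y. \<forall>i\<in>F. y i = x i} \<subseteq> U" using V(3) by (meson order_trans)
  qed
next
  assume H: "\<forall>x\<in>U. \<exists>F. finite F \<and> {y. \<forall>i\<in>F. y i = x i} \<subseteq> U"
  show "openin PB U"
    unfolding openin_product_topology_alt
  proof
    fix x assume "x \<in> U"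
    then obtain F where F: "finite F" "{y. \<forall>i\<in>F. y i = x i} \<subseteq> U" using H by meson
    define V where "V = (\<lambda>i. if i \<in> F then {x i} else UNIV)"
    have "{i \<in> UNIV. V i \<noteq> topspace (discrete_topology UNIV)} \<subseteq> F" by (auto simp: V_def)
    then have "finite {i \<in> UNIV. V i \<noteq> topspace (discrete_topology UNIV)}" using F(1) finite_subset by blast
    moreover have "x \<in> Pi\<^sub>E UNIV V" by (auto simp: V_def)
    moreover have "Pi\<^sub>E UNIV V \<subseteq> U"
    proof
      fix y assume "y \<in> Pi\<^sub>E UNIV V"
      then have "\<forall>i\<in>F. y i = x i" unfolding V_def PiE_iff by (metis UNIV_I singletonD)
      then show "y \<in> U" using F(2) by blast
    qed
    moreover have "\<forall>i\<in>UNIV. openin (discrete_topology UNIV) (V i)" by simp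
    ultimately show "\<exists>V. finite {i \<in> UNIV. V i \<noteq> topspace (discrete_topology UNIV)} \<and>
          (\<forall>i\<in>UNIV. openin (discrete_topology UNIV) (V i)) \<and> x \<in> Pi\<^sub>E UNIV V \<and> Pi\<^sub>E UNIV V \<subseteq> U"
      by blast
  qed
qed
lemma iso_pullback:
  fixes f :: "'a \<Rightarrow> 'i \<Rightarrow> bool"
  shows "openin (subtopology (pullback_topology UNIV f PB) S) {x} \<longleftrightarrow>
     x \<in> S \<and> (\<exists>F. finite F \<and> (\<forall>y\<in>S. (\<forall>i\<in>F. f y i = f x i) \<longrightarrow> y = x))"
proof
  assume "openin (subtopology (pullback_topology UNIV f PB) S) {x}"
  then obtain T where T: "openin (pullback_topology UNIV f PB) T" "{x} = T \<inter> S"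
    by (auto simp: openin_subtopology)
  then obtain U where U: "openin PB U" "T = f -` U \<inter> UNIV" by (auto simp: openin_pullback_topology)
  have "f x \<in> U" using T U by auto
  then obtain F where F: "finite F" "{y. \<forall>i\<in>F. y i = f x i} \<subseteq> U"
    using U(1) prod_open_iff by blast
  have "\<forall>y\<in>S. (\<forall>i\<in>F. f y i = f x i) \<longrightarrow> y = x"
  proof (intro ballI impI)
    fix y assume "y \<in> S" "\<forall>i\<in>F. f y i = f x i"
    then have "y \<in> T \<inter> S" using F U by auto
    then show "y = x" using T by auto
  qed
  then show "x \<in> S \<and> (\<exists>F. finite F \<and> (\<forall>y\<in>S. (\<forall>i\<in>F. f y i = f x i) \<longrightarrow> y = x))"
    using T F by auto
next
  assume "x \<in> S \<and> (\<exists>F. finite F \<and> (\<forall>y\<in>S. (\<forall>i\<in>F. f y i = f x i) \<longrightarrow> y = x))"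
  then obtain F where F: "x \<in> S" "finite F" "\<forall>y\<in>S. (\<forall>i\<in>F. f y i = f x i) \<longrightarrow> y = x" by blast
  define U where "U = {z. \<forall>i\<in>F. z i = f x i}"
  have "openin PB U" unfolding prod_open_iff U_def using F(2) by auto
  then have "openin (pullback_topology UNIV f PB) (f -` U \<inter> UNIV)"
    by (auto simp: openin_pullback_topology)
  moreover have "{x} = (f -` U \<inter> UNIV) \<inter> S" using F by (auto simp: U_def)
  ultimately show "openin (subtopology (pullback_topology UNIV f PB) S) {x}"
    by (auto simp: openin_subtopology)
qed

lemma pullback_id: "pullback_topology UNIV id X = X"
  by (simp add: topology_eq openin_pullback_topology)

lemma iso_set_top:
  "openin (subtopology set_top S) {\<xi>} \<longleftrightarrow>
     \<xi> \<in> S \<and> (\<exists>F. finite F \<and> (\<forall>\<eta>\<in>S. (\<forall>w\<in>F. (w \<in> \<eta>) = (w \<in> \<xi>)) \<longrightarrow> \<eta> = \<xi>))"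
  unfolding set_top_def by (rule iso_pullback)

lemma iso_cantor:
  "openin (subtopology cantor_top S) {x} \<longleftrightarrow>
     x \<in> S \<and> (\<exists>F. finite F \<and> (\<forall>y\<in>S. (\<forall>i\<in>F. y i = x i) \<longrightarrow> y = x))"
  using iso_pullback[of id S x] unfolding cantor_top_def pullback_id by simp


lemma topspace_PB: "topspace (PB :: ('i \<Rightarrow> bool) topology) = UNIV"
  by (simp add: PiE_UNIV_domain)

lemma cont_finite_dep:
  fixes g :: "('i \<Rightarrow> bool) \<Rightarrow> 'b"
  assumes "finite F" "\<And>b b'. (\<forall>j\<in>F. b j = b' j) \<Longrightarrow> g b = g b'"
  shows "continuous_map PB (discrete_topology UNIV) g"
  unfolding continuous_map_def
proof (intro conjI allI impI)
  show "g \<in> topspace PB \<rightarrow> topspace (discrete_topology UNIV)" by simp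
next
  fix U :: "'b set" assume "openin (discrete_topology UNIV) U"
  have "openin PB {x. g x \<in> U}"
    unfolding prod_open_iff
  proof
    fix x assume x: "x \<in> {x. g x \<in> U}"
    have "{y. \<forall>i\<in>F. y i = x i} \<subseteq> {x. g x \<in> U}"
    proof
      fix y assume "y \<in> {y. \<forall>i\<in>F. y i = x i}"
      then have "g y = g x" using assms(2) by simp
      then show "y \<in> {x. g x \<in> U}" using x by simp
    qed
    then show "\<exists>F. finite F \<and> {y. \<forall>i\<in>F. y i = x i} \<subseteq> {x. g x \<in> U}" using assms(1) by blast
  qed
  then show "openin PB {x \<in> topspace PB. g x \<in> U}" by (simp add: topspace_PB)
qed

definition agree :: "nat \<Rightarrow> (nat \<Rightarrow> bool) \<Rightarrow> (nat \<Rightarrow> bool) \<Rightarrow> bool" where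
  "agree n x y \<longleftrightarrow> (\<forall>i<n. x i = y i)"

lemma agree_sym: "agree n x y \<Longrightarrow> agree n y x" by (auto simp: agree_def)
lemma agree_trans: "agree n x y \<Longrightarrow> agree n y z \<Longrightarrow> agree n x z" by (auto simp: agree_def)
lemma agree_mono: "agree n x y \<Longrightarrow> m \<le> n \<Longrightarrow> agree m x y" by (auto simp: agree_def)

locale cset =
  fixes K :: "(nat \<Rightarrow> bool) set" and y0 :: "nat \<Rightarrow> bool"
  assumes y0: "y0 \<in> K"
    and clo: "\<And>x. (\<And>n. \<exists>y\<in>K. agree n y x) \<Longrightarrow> x \<in> K"
    and perf: "\<And>x n. x \<in> K \<Longrightarrow> \<exists>y\<in>K. y \<noteq> x \<and> agree n y x"
begin

definition brk :: "(nat \<Rightarrow> bool) \<Rightarrow> nat \<Rightarrow> bool" where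
  "brk y m \<longleftrightarrow> (\<exists>z1\<in>K. \<exists>z2\<in>K. agree m z1 y \<and> agree m z2 y \<and> z1 m \<noteq> z2 m)"

lemma brk_cong: "agree m y y' \<Longrightarrow> brk y m = brk y' m"
  unfolding brk_def agree_def by auto

lemma first_diff:
  assumes "x \<noteq> y"
  obtains j where "agree j x y" "x j \<noteq> y j"
proof -
  have "\<exists>j. x j \<noteq> y j" using assms by auto
  define j where "j = (LEAST j. x j \<noteq> y j)"
  have "x j \<noteq> y j" unfolding j_def by (rule LeastI_ex) fact
  moreover have "agree j x y" unfolding agree_def j_def using not_less_Least by blast
  ultimately show ?thesis using that by blast
qed

lemma ex_brk: assumes "y \<in> K" shows "\<exists>m\<ge>n. brk y m"
proof -
  obtain z where z: "z \<in> K" "z \<noteq> y" "agree n z y" using perf[OF assms] by blast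
  obtain j where j: "agree j z y" "z j \<noteq> y j" using first_diff[OF z(2)] by blast
  have "n \<le> j" using z(3) j(2) unfolding agree_def by (meson not_le)
  moreover have "brk y j" unfolding brk_def
    using z(1) assms j(1) j(2) by (intro bexI[of _ z] bexI[of _ y]) (auto simp: agree_def)
  ultimately show ?thesis by blast
qed

definition nxt :: "(nat \<Rightarrow> bool) \<Rightarrow> nat \<Rightarrow> nat" where
  "nxt y n = (LEAST m. n \<le> m \<and> brk y m)"

lemma nxt: assumes "y \<in> K" shows "n \<le> nxt y n" "brk y (nxt y n)"
  "\<And>m. n \<le> m \<Longrightarrow> m < nxt y n \<Longrightarrow> \<not> brk y m"
proof -
  have ex: "\<exists>m. n \<le> m \<and> brk y m" using ex_brk[OF assms] by blast
  show "n \<le> nxt y n" "brk y (nxt y n)" unfolding nxt_def using LeastI_ex[OF ex] by auto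
  show "\<And>m. n \<le> m \<Longrightarrow> m < nxt y n \<Longrightarrow> \<not> brk y m" unfolding nxt_def using not_less_Least by blast
qed

definition step :: "(nat \<Rightarrow> bool) \<Rightarrow> nat \<Rightarrow> bool \<Rightarrow> (nat \<Rightarrow> bool)" where
  "step y n b = (SOME z. z \<in> K \<and> agree (nxt y n) z y \<and> z (nxt y n) = b)"

lemma step: assumes "y \<in> K"
  shows "step y n b \<in> K" "agree (nxt y n) (step y n b) y" "step y n b (nxt y n) = b"
proof -
  obtain z1 z2 where z: "z1 \<in> K" "z2 \<in> K" "agree (nxt y n) z1 y" "agree (nxt y n) z2 y"
      "z1 (nxt y n) \<noteq> z2 (nxt y n)"
    using nxt(2)[OF assms] unfolding brk_def by blast
  have "\<exists>z. z \<in> K \<and> agree (nxt y n) z y \<and> z (nxt y n) = b"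
    using z by (cases "z1 (nxt y n) = b") auto
  then have "step y n b \<in> K \<and> agree (nxt y n) (step y n b) y \<and> step y n b (nxt y n) = b"
    unfolding step_def by (rule someI_ex)
  then show "step y n b \<in> K" "agree (nxt y n) (step y n b) y" "step y n b (nxt y n) = b" by auto
qed

fun sq :: "(nat \<Rightarrow> bool) \<Rightarrow> nat \<Rightarrow> (nat \<Rightarrow> bool) \<times> nat" where
  "sq b 0 = (y0, 0)"
| "sq b (Suc k) = (step (fst (sq b k)) (snd (sq b k)) (b k), Suc (nxt (fst (sq b k)) (snd (sq b k))))"

lemma sq_K: "fst (sq b k) \<in> K"
  by (induction k) (auto simp: y0 step)

lemma sq_len: "k \<le> snd (sq b k)"
proof (induction k)
  case (Suc k) then show ?case using nxt(1)[OF sq_K[of b k], of "snd (sq b k)"] by simp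
qed simp

lemma sq_len_mono: "snd (sq b k) < snd (sq b (Suc k))"
  using nxt(1)[OF sq_K[of b k], of "snd (sq b k)"] by simp

lemma sq_agree1: "agree (snd (sq b k)) (fst (sq b (Suc k))) (fst (sq b k))"
  using agree_mono[OF step(2)[OF sq_K[of b k], of "snd (sq b k)" "b k"] nxt(1)[OF sq_K[of b k], of "snd (sq b k)"]] by simp

lemma sq_agree: "agree (snd (sq b k)) (fst (sq b (k + j))) (fst (sq b k))"
proof (induction j)
  case 0 then show ?case by (simp add: agree_def)
next
  case (Suc j)
  have "snd (sq b k) \<le> snd (sq b (k + j))"
  proof (induction j)
    case (Suc j) then show ?case using sq_len_mono[of b "k+j"] by simp
  qed simp
  then have "agree (snd (sq b k)) (fst (sq b (Suc (k + j)))) (fst (sq b (k + j)))"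
    using sq_agree1 agree_mono by blast
  then show ?case using Suc agree_trans by simp
qed

definition FF :: "(nat \<Rightarrow> bool) \<Rightarrow> (nat \<Rightarrow> bool)" where
  "FF b i = fst (sq b (Suc i)) i"

lemma FF_agree: "agree (snd (sq b k)) (FF b) (fst (sq b k))"
  unfolding agree_def
proof (intro allI impI)
  fix i assume i: "i < snd (sq b k)"
  show "FF b i = fst (sq b k) i"
  proof (cases "Suc i \<le> k")
    case True
    then obtain j where j: "k = Suc i + j" by (metis le_add_diff_inverse)
    have "agree (snd (sq b (Suc i))) (fst (sq b k)) (fst (sq b (Suc i)))" using sq_agree j by blast
    moreover have "i < snd (sq b (Suc i))" using sq_len[of "Suc i" b] by simp
    ultimately show ?thesis unfolding FF_def agree_def by simp
  next
    case False
    then obtain j where j: "Suc i = k + j" by (metis le_add_diff_inverse nat_le_linear)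
    then show ?thesis using sq_agree[of b k j] i unfolding FF_def agree_def by simp
  qed
qed

lemma FF_K: "FF b \<in> K"
proof (rule clo)
  fix n
  have "agree n (fst (sq b n)) (FF b)"
    using agree_sym[OF agree_mono[OF FF_agree[of b n] sq_len[of n b]]] .
  then show "\<exists>y\<in>K. agree n y (FF b)" using sq_K by blast
qed

lemma FF_bit: "FF b (nxt (fst (sq b k)) (snd (sq b k))) = b k"
proof -
  have "agree (snd (sq b (Suc k))) (FF b) (fst (sq b (Suc k)))" by (rule FF_agree)
  then have "FF b (nxt (fst (sq b k)) (snd (sq b k))) = fst (sq b (Suc k)) (nxt (fst (sq b k)) (snd (sq b k)))"
    unfolding agree_def by simp
  also have "\<dots> = b k" using step(3)[OF sq_K[of b k]] by simp
  finally show ?thesis .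
qed

lemma sq_dep: "(\<forall>j<k. b j = b' j) \<Longrightarrow> sq b k = sq b' k"
  by (induction k) auto

lemma FF_dep: "(\<forall>j\<in>{..i}. b j = b' j) \<Longrightarrow> FF b i = FF b' i"
  unfolding FF_def using sq_dep[of "Suc i" b b'] by simp

lemma FF_inj: "inj FF"
proof
  fix b b' assume eq: "FF b = FF b'"
  show "b = b'"
  proof (rule ccontr)
    assume "b \<noteq> b'"
    then obtain k where k: "agree k b b'" "b k \<noteq> b' k" using first_diff by blast
    have "sq b k = sq b' k" using sq_dep k(1) unfolding agree_def by blast
    then show False using FF_bit[of b k] FF_bit[of b' k] eq k(2) by simp
  qed
qed

fun YY :: "(nat \<Rightarrow> bool) \<Rightarrow> nat \<Rightarrow> (nat \<Rightarrow> bool) \<times> nat" where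
    "YY x 0 = (y0, 0)"
  | "YY x (Suc k) = (step (fst (YY x k)) (snd (YY x k)) (x (nxt (fst (YY x k)) (snd (YY x k)))),
                   Suc (nxt (fst (YY x k)) (snd (YY x k))))"

lemma FF_surj: assumes x: "x \<in> K" shows "\<exists>b. FF b = x"
proof -
  define b where "b = (\<lambda>k. x (nxt (fst (YY x k)) (snd (YY x k))))"
  have sqY: "sq b k = YY x k" for k
    by (induction k) (simp_all add: b_def)
  have inv: "agree (snd (YY x k)) (fst (YY x k)) x" for k
  proof (induction k)
    case 0 then show ?case by (simp add: agree_def)
  next
    case (Suc k)
    define y where "y = fst (YY x k)"
    define n where "n = snd (YY x k)"
    have yK: "y \<in> K" using sq_K[of b k] sqY y_def by simp
    have H: "agree n y x" using Suc by (simp add: y_def n_def)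
    have A: "agree (nxt y n) y x"
    proof (rule ccontr)
      assume "\<not> agree (nxt y n) y x"
      then have "y \<noteq> x" by (auto simp: agree_def)
      then obtain j where j: "agree j y x" "y j \<noteq> x j" using first_diff by blast
      have "j < nxt y n"
      proof (rule ccontr)
        assume "\<not> j < nxt y n"
        then have "agree (nxt y n) y x" using j(1) agree_mono by simp
        then show False using \<open>\<not> agree (nxt y n) y x\<close> by simp
      qed
      moreover have "n \<le> j" using H j(2) unfolding agree_def by (meson not_le)
      moreover have "brk y j" unfolding brk_def
        using yK x j(1) j(2) by (intro bexI[of _ y] bexI[of _ x]) (auto simp: agree_def)
      ultimately show False using nxt(3)[OF yK] by blast
    qed
    have "agree (Suc (nxt y n)) (step y n (x (nxt y n))) x"
      using step[OF yK, of n "x (nxt y n)"] A unfolding agree_def by (metis less_Suc_eq)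
    then show ?case by (simp add: y_def n_def)
  qed
  have "FF b = x"
  proof
    fix i
    have "agree (snd (sq b (Suc i))) (FF b) x"
      using agree_trans[OF FF_agree[of b "Suc i"], of x] inv[of "Suc i"] sqY by (simp add: b_def)
    moreover have "i < snd (sq b (Suc i))" using sq_len[of "Suc i" b] by simp
    ultimately show "FF b i = x i" unfolding agree_def by simp
  qed
  then show ?thesis by blast
qed

lemma FF_image: "range FF = K"
  using FF_K FF_surj by blast

lemma FF_cont: "continuous_map cantor_top cantor_top FF"
  unfolding cantor_top_def continuous_map_componentwise_UNIV
proof
  fix i
  show "continuous_map PB (discrete_topology UNIV) (\<lambda>x. FF x i)"
    by (rule cont_finite_dep[of "{..i}"]) (simp, metis FF_dep)
qed

theorem cset_homeo: "subtopology cantor_top K homeomorphic_space cantor_top"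
proof -
  have tc: "topspace cantor_top = UNIV" unfolding cantor_top_def by (rule topspace_PB)
  have "homeomorphic_map cantor_top (subtopology cantor_top K) FF"
  proof (rule continuous_imp_homeomorphic_map)
    show "continuous_map cantor_top (subtopology cantor_top K) FF"
      using FF_cont FF_K by (simp add: continuous_map_in_subtopology)
    show "compact_space cantor_top" unfolding cantor_top_def
      by (simp add: compact_space_product_topology compact_space_discrete_topology)
    show "Hausdorff_space (subtopology cantor_top K)" unfolding cantor_top_def
      by (simp add: Hausdorff_space_subtopology Hausdorff_space_product_topology)
    show "FF ` topspace cantor_top = topspace (subtopology cantor_top K)"
      using FF_image tc by simp
    show "inj_on FF (topspace cantor_top)" using FF_inj tc by simp
  qed
  then show ?thesis using homeomorphic_space homeomorphic_space_sym by blast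
qed

end


lemma linv_simps[simp]: "linv (Pos e) = Neg e" "linv (Neg e) = Pos e" by auto

lemma letters_simps[simp]: "Pos e \<in> letters E1 \<longleftrightarrow> e \<in> E1" "Neg e \<in> letters E1 \<longleftrightarrow> e \<in> E1"
  by (auto simp: letters_def)

lemma letters_finite: "finite E1 \<Longrightarrow> finite (letters E1)"
  by (simp add: letters_def)

lemma reduced_Nil[simp]: "reduced E1 []" by (simp add: reduced_def)

lemma reduced_Cons:
  "reduced E1 (a # w) \<longleftrightarrow> a \<in> letters E1 \<and> reduced E1 w \<and> (w \<noteq> [] \<longrightarrow> hd w \<noteq> linv a)"
proof
  assume R: "reduced E1 (a # w)"
  then have A: "set (a # w) \<subseteq> letters E1" "\<forall>i. Suc i < length (a # w) \<longrightarrow> (a # w) ! Suc i \<noteq> linv ((a # w) ! i)"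
    by (auto simp: reduced_def)
  have "\<forall>i. Suc i < length w \<longrightarrow> w ! Suc i \<noteq> linv (w ! i)"
  proof (intro allI impI)
    fix i assume "Suc i < length w"
    then show "w ! Suc i \<noteq> linv (w ! i)" using A(2)[rule_format, of "Suc i"] by simp
  qed
  moreover have "w \<noteq> [] \<longrightarrow> hd w \<noteq> linv a"
    using A(2)[rule_format, of 0] by (cases w) auto
  ultimately show "a \<in> letters E1 \<and> reduced E1 w \<and> (w \<noteq> [] \<longrightarrow> hd w \<noteq> linv a)"
    using A(1) by (auto simp: reduced_def)
next
  assume R: "a \<in> letters E1 \<and> reduced E1 w \<and> (w \<noteq> [] \<longrightarrow> hd w \<noteq> linv a)"
  have "\<forall>i. Suc i < length (a # w) \<longrightarrow> (a # w) ! Suc i \<noteq> linv ((a # w) ! i)"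
  proof (intro allI impI)
    fix i assume i: "Suc i < length (a # w)"
    show "(a # w) ! Suc i \<noteq> linv ((a # w) ! i)"
    proof (cases i)
      case 0 then show ?thesis using R i by (cases w) auto
    next
      case (Suc j) then show ?thesis using R i by (auto simp: reduced_def)
    qed
  qed
  then show "reduced E1 (a # w)" using R by (auto simp: reduced_def)
qed

lemma reduced_tl: "reduced E1 w \<Longrightarrow> reduced E1 (tl w)"
  by (cases w) (auto simp: reduced_Cons)

lemma reduced_drop: "reduced E1 w \<Longrightarrow> reduced E1 (drop k w)"
proof (induction k arbitrary: w)
  case (Suc k) then show ?case by (simp add: drop_Suc reduced_tl)
qed simp

lemma gmult_Cons: "(\<alpha> = [] \<or> hd \<alpha> \<noteq> linv \<sigma>) \<Longrightarrow> gmult \<sigma> \<alpha> = \<sigma> # \<alpha>"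
  by (cases \<alpha>) (auto simp: gmult_def)

lemma gmult_inv: "gmult (linv \<tau>) (\<tau> # \<beta>) = \<beta>"
  by (cases \<tau>) (auto simp: gmult_def)

lemma gmult_reduced: "reduced E1 \<alpha> \<Longrightarrow> \<sigma> \<in> letters E1 \<Longrightarrow> reduced E1 (gmult \<sigma> \<alpha>)"
proof (cases \<alpha>)
  case Nil
  assume "\<sigma> \<in> letters E1" then show ?thesis using Nil by (simp add: gmult_def reduced_Cons)
next
  case (Cons \<tau> \<beta>)
  assume A: "reduced E1 \<alpha>" "\<sigma> \<in> letters E1"
  show ?thesis
  proof (cases "\<tau> = linv \<sigma>")
    case True then show ?thesis using A Cons by (simp add: gmult_def reduced_Cons)
  next
    case False then show ?thesis using A Cons by (simp add: gmult_def reduced_Cons)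
  qed
qed

locale G =
  fixes E00 E01 :: "'v set" and E1 :: "'e set" and r s :: "'e \<Rightarrow> 'v" and C :: "'e set set"
  assumes G: "fin_bip_sep_graph E00 E01 E1 r s C"
begin

lemma GG: "finite E00 \<and> finite E01 \<and> finite E1 \<and> E00 \<inter> E01 = {} \<and>
     s ` E1 = E01 \<and> r ` E1 = E00 \<and>
     (\<forall>X\<in>C. X \<noteq> {} \<and> X \<subseteq> E1 \<and> (\<forall>e\<in>X. \<forall>f\<in>X. r e = r f)) \<and>
     (\<forall>e\<in>E1. \<exists>!X. X \<in> C \<and> e \<in> X)"
  using G unfolding fin_bip_sep_graph_def .

lemma finE1: "finite E1" using GG by blast
lemma disj: "E00 \<inter> E01 = {}" using GG by blast
lemma sE: "s ` E1 = E01" using GG by blast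
lemma rE: "r ` E1 = E00" using GG by blast
lemma C_ne: "X \<in> C \<Longrightarrow> X \<noteq> {}" using GG by blast
lemma C_sub: "X \<in> C \<Longrightarrow> X \<subseteq> E1" using GG by blast
lemma C_r: "X \<in> C \<Longrightarrow> e \<in> X \<Longrightarrow> f \<in> X \<Longrightarrow> r e = r f" using GG by blast
lemma C_uniq: "e \<in> E1 \<Longrightarrow> \<exists>!X. X \<in> C \<and> e \<in> X" using GG by blast

lemma sE01: "e \<in> E1 \<Longrightarrow> s e \<in> E01" using sE imageI by metis
lemma rE00: "e \<in> E1 \<Longrightarrow> r e \<in> E00" using rE imageI by metis
lemma rs_ne: "e \<in> E1 \<Longrightarrow> f \<in> E1 \<Longrightarrow> r e \<noteq> s f" using sE01[of f] rE00[of e] disj by (metis IntI empty_iff)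

lemma cls: "e \<in> E1 \<Longrightarrow> cls C e \<in> C \<and> e \<in> cls C e"
  unfolding cls_def using theI'[OF C_uniq] by simp

lemma cls_eq: assumes "X \<in> C" "e \<in> X" shows "cls C e = X"
proof -
  have "e \<in> E1" using assms C_sub by blast
  then show ?thesis unfolding cls_def using the1_equality[OF C_uniq] assms by simp
qed

lemma C_same: "X \<in> C \<Longrightarrow> X' \<in> C \<Longrightarrow> e \<in> X \<Longrightarrow> e \<in> X' \<Longrightarrow> X = X'"
  using cls_eq[of X e] cls_eq[of X' e] by simp

lemma Cv_iff: "X \<in> Cv r C v \<longleftrightarrow> X \<in> C \<and> (\<forall>e\<in>X. r e = v)"
  by (simp add: Cv_def)

lemma cls_Cv: "e \<in> E1 \<Longrightarrow> cls C e \<in> Cv r C (r e)"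
proof -
  assume e: "e \<in> E1"
  have c: "cls C e \<in> C" "e \<in> cls C e" using cls[OF e] by auto
  have "\<forall>x\<in>cls C e. r x = r e" using C_r[OF c(1) _ c(2)] by blast
  then show ?thesis using c unfolding Cv_iff by blast
qed

lemma Cv_mem: "X \<in> Cv r C v \<Longrightarrow> e \<in> X \<Longrightarrow> r e = v \<and> e \<in> E1"
proof -
  assume A: "X \<in> Cv r C v" "e \<in> X"
  then have "X \<in> C" "\<forall>e\<in>X. r e = v" unfolding Cv_iff by auto
  then show ?thesis using A(2) C_sub[of X] by auto
qed

lemma Cv_C: "X \<in> Cv r C v \<Longrightarrow> X \<in> C" by (simp add: Cv_iff)

lemma finC: "finite C"
proof -
  have "C \<subseteq> Pow E1" using C_sub by (simp add: subset_iff)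
  moreover have "finite (Pow E1)" using finE1 by simp
  ultimately show ?thesis by (rule finite_subset)
qed

lemma finCv: "finite (Cv r C v)"
proof -
  have "Cv r C v \<subseteq> C" unfolding Cv_def by (rule Collect_restrict)
  then show ?thesis using finC by (rule finite_subset)
qed

lemma finX: "X \<in> C \<Longrightarrow> finite X" using finite_subset[OF C_sub finE1] .

lemma card1: assumes "X \<in> C" "\<not> 2 \<le> card X" "a \<in> X" "b \<in> X" shows "a = b"
proof (rule ccontr)
  assume ne: "a \<noteq> b"
  have "{a, b} \<subseteq> X" using assms(3,4) by simp
  then have "card {a, b} \<le> card X" by (rule card_mono[OF finX[OF assms(1)]])
  moreover have "card {a, b} = 2" using ne by simp
  ultimately show False using assms(2) by simp
qed

lemma card2: assumes "X \<in> C" "2 \<le> card X" "a \<in> X" shows "\<exists>b\<in>X. b \<noteq> a"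
proof (rule ccontr)
  assume H: "\<not> (\<exists>b\<in>X. b \<noteq> a)"
  have "X \<subseteq> {a}"
  proof
    fix x assume "x \<in> X" then show "x \<in> {a}" using H by blast
  qed
  then have "card X \<le> card {a}" by (rule card_mono[rotated]) simp
  then show False using assms(2) by simp
qed

definition chv :: "('e letter list \<Rightarrow> 'e set \<Rightarrow> 'e) \<Rightarrow> bool" where
  "chv ch \<longleftrightarrow> (\<forall>\<alpha> Y. Y \<in> C \<longrightarrow> ch \<alpha> Y \<in> Y)"

lemma chvD: "chv ch \<Longrightarrow> Y \<in> C \<Longrightarrow> ch \<alpha> Y \<in> Y" by (simp add: chv_def)

inductive_set gen :: "'v \<Rightarrow> ('e letter list \<Rightarrow> 'e set \<Rightarrow> 'e) \<Rightarrow> 'e letter list set"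
  for v ch where
  g_nil: "[] \<in> gen v ch"
| g_root1: "v \<in> E01 \<Longrightarrow> f \<in> E1 \<Longrightarrow> s f = v \<Longrightarrow> [Pos f] \<in> gen v ch"
| g_root0: "v \<notin> E01 \<Longrightarrow> X \<in> Cv r C v \<Longrightarrow> [Neg (ch [] X)] \<in> gen v ch"
| g_neg: "Neg e # \<beta> \<in> gen v ch \<Longrightarrow> f \<in> E1 \<Longrightarrow> s f = s e \<Longrightarrow> f \<noteq> e \<Longrightarrow> Pos f # Neg e # \<beta> \<in> gen v ch"
| g_pos: "Pos e # \<beta> \<in> gen v ch \<Longrightarrow> Y \<in> Cv r C (r e) \<Longrightarrow> Y \<noteq> cls C e
           \<Longrightarrow> Neg (ch (Pos e # \<beta>) Y) # Pos e # \<beta> \<in> gen v ch"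

lemma gen_reduced: assumes "w \<in> gen v ch" "chv ch" shows "reduced E1 w"
  using assms(1)
proof (induction w rule: gen.induct)
  case g_nil then show ?case by simp
next
  case (g_root1 f) then show ?case by (simp add: reduced_Cons)
next
  case (g_root0 X)
  have XC: "X \<in> C" using Cv_C[OF g_root0.hyps(2)] .
  have "ch [] X \<in> X" using chvD[OF assms(2) XC] .
  then have "ch [] X \<in> E1" using C_sub[OF XC] by (rule subsetD[rotated])
  then show ?case by (simp add: reduced_Cons)
next
  case (g_neg e \<beta> f)
  then show ?case by (simp add: reduced_Cons)
next
  case (g_pos e \<beta> Y)
  have Y: "Y \<in> C" using Cv_C[OF g_pos.hyps(2)] .
  have m: "ch (Pos e # \<beta>) Y \<in> Y" using chvD[OF assms(2) Y] .
  have ne: "ch (Pos e # \<beta>) Y \<noteq> e"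
  proof
    assume "ch (Pos e # \<beta>) Y = e"
    then have "cls C e = Y" using cls_eq[OF Y] m by simp
    then show False using g_pos.hyps(3) by simp
  qed
  have "ch (Pos e # \<beta>) Y \<in> E1" using C_sub[OF Y] m by (rule subsetD)
  then show ?case using g_pos.IH ne by (simp add: reduced_Cons)
qed

lemma gen_tl: assumes "w \<in> gen v ch" shows "tl w \<in> gen v ch"
  using assms by (cases rule: gen.cases) (simp_all add: gen.g_nil)

lemma gen_drop: "w \<in> gen v ch \<Longrightarrow> drop k w \<in> gen v ch"
proof (induction k arbitrary: w)
  case (Suc k) then show ?case by (simp add: drop_Suc gen_tl)
qed simp

lemma gen_single: "[\<sigma>] \<in> gen v ch \<longleftrightarrow>
   (v \<in> E01 \<and> (\<exists>f\<in>E1. s f = v \<and> \<sigma> = Pos f)) \<or> (v \<notin> E01 \<and> (\<exists>X\<in>Cv r C v. \<sigma> = Neg (ch [] X)))"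
proof
  assume "[\<sigma>] \<in> gen v ch"
  then show "(v \<in> E01 \<and> (\<exists>f\<in>E1. s f = v \<and> \<sigma> = Pos f)) \<or> (v \<notin> E01 \<and> (\<exists>X\<in>Cv r C v. \<sigma> = Neg (ch [] X)))"
    by (cases rule: gen.cases) auto
next
  assume "(v \<in> E01 \<and> (\<exists>f\<in>E1. s f = v \<and> \<sigma> = Pos f)) \<or> (v \<notin> E01 \<and> (\<exists>X\<in>Cv r C v. \<sigma> = Neg (ch [] X)))"
  then show "[\<sigma>] \<in> gen v ch"
  proof
    assume "v \<in> E01 \<and> (\<exists>f\<in>E1. s f = v \<and> \<sigma> = Pos f)"
    then obtain f where "v \<in> E01" "f \<in> E1" "s f = v" "\<sigma> = Pos f" by blast
    then show ?thesis using gen.g_root1 by simp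
  next
    assume "v \<notin> E01 \<and> (\<exists>X\<in>Cv r C v. \<sigma> = Neg (ch [] X))"
    then obtain X where "v \<notin> E01" "X \<in> Cv r C v" "\<sigma> = Neg (ch [] X)" by blast
    then show ?thesis using gen.g_root0 by simp
  qed
qed

lemma gen_pos_child: "\<sigma> # Pos e # \<beta> \<in> gen v ch \<longleftrightarrow>
   Pos e # \<beta> \<in> gen v ch \<and> (\<exists>Y\<in>Cv r C (r e). Y \<noteq> cls C e \<and> \<sigma> = Neg (ch (Pos e # \<beta>) Y))"
proof
  assume "\<sigma> # Pos e # \<beta> \<in> gen v ch"
  then show "Pos e # \<beta> \<in> gen v ch \<and> (\<exists>Y\<in>Cv r C (r e). Y \<noteq> cls C e \<and> \<sigma> = Neg (ch (Pos e # \<beta>) Y))"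
    by (cases rule: gen.cases) auto
next
  assume "Pos e # \<beta> \<in> gen v ch \<and> (\<exists>Y\<in>Cv r C (r e). Y \<noteq> cls C e \<and> \<sigma> = Neg (ch (Pos e # \<beta>) Y))"
  then obtain Y where "Pos e # \<beta> \<in> gen v ch" "Y \<in> Cv r C (r e)" "Y \<noteq> cls C e" "\<sigma> = Neg (ch (Pos e # \<beta>) Y)" by blast
  then show "\<sigma> # Pos e # \<beta> \<in> gen v ch" using gen.g_pos by simp
qed

lemma gen_neg_child: "\<sigma> # Neg e # \<beta> \<in> gen v ch \<longleftrightarrow>
   Neg e # \<beta> \<in> gen v ch \<and> (\<exists>f\<in>E1. s f = s e \<and> f \<noteq> e \<and> \<sigma> = Pos f)"
proof
  assume "\<sigma> # Neg e # \<beta> \<in> gen v ch"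
  then show "Neg e # \<beta> \<in> gen v ch \<and> (\<exists>f\<in>E1. s f = s e \<and> f \<noteq> e \<and> \<sigma> = Pos f)"
    by (cases rule: gen.cases) auto
next
  assume "Neg e # \<beta> \<in> gen v ch \<and> (\<exists>f\<in>E1. s f = s e \<and> f \<noteq> e \<and> \<sigma> = Pos f)"
  then obtain f where "Neg e # \<beta> \<in> gen v ch" "f \<in> E1" "s f = s e" "f \<noteq> e" "\<sigma> = Pos f" by blast
  then show "\<sigma> # Neg e # \<beta> \<in> gen v ch" using gen.g_neg by simp
qed

end


lemma linv_letters: "\<tau> \<in> letters E1 \<Longrightarrow> linv \<tau> \<in> letters E1"
  by (cases \<tau>) auto

lemma gmult_nil: "gmult \<sigma> [] = [\<sigma>]" by (simp add: gmult_def)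

lemma xi_at_iff: "\<sigma> \<in> xi_at E1 \<xi> \<alpha> \<longleftrightarrow> \<sigma> \<in> letters E1 \<and> gmult \<sigma> \<alpha> \<in> \<xi>"
  by (simp add: xi_at_def)

context G begin

abbreviation "Om \<equiv> Omega E00 E01 E1 r s C"
abbreviation "OmV v \<equiv> Omega_v E00 E01 E1 r s C v"

lemma gen_xi_nil1: assumes "v \<in> E01" shows "xi_at E1 (gen v ch) [] = Pos ` {f\<in>E1. s f = v}"
proof (rule set_eqI)
  fix \<sigma>
  show "\<sigma> \<in> xi_at E1 (gen v ch) [] \<longleftrightarrow> \<sigma> \<in> Pos ` {f\<in>E1. s f = v}"
    unfolding xi_at_iff gmult_nil gen_single using assms by auto
qed

lemma gen_xi_nil0: assumes "chv ch" "v \<notin> E01"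
  shows "xi_at E1 (gen v ch) [] = {Neg (ch [] X) |X. X \<in> Cv r C v}"
proof (rule set_eqI)
  fix \<sigma>
  have L: "X \<in> Cv r C v \<Longrightarrow> ch [] X \<in> E1" for X
    using chvD[OF assms(1) Cv_C] Cv_mem by blast
  show "\<sigma> \<in> xi_at E1 (gen v ch) [] \<longleftrightarrow> \<sigma> \<in> {Neg (ch [] X) |X. X \<in> Cv r C v}"
    unfolding xi_at_iff gmult_nil gen_single using assms(2) L by auto
qed

lemma gen_xi_neg: assumes "chv ch" "Neg e # \<beta> \<in> gen v ch"
  shows "xi_at E1 (gen v ch) (Neg e # \<beta>) = Pos ` {f\<in>E1. s f = s e}"
proof (rule set_eqI)
  fix \<sigma>
  have eE: "e \<in> E1" using gen_reduced[OF assms(2) assms(1)] by (simp add: reduced_Cons)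
  have b: "\<beta> \<in> gen v ch" using gen_tl[OF assms(2)] by simp
  show "\<sigma> \<in> xi_at E1 (gen v ch) (Neg e # \<beta>) \<longleftrightarrow> \<sigma> \<in> Pos ` {f\<in>E1. s f = s e}"
  proof (cases "\<sigma> = Pos e")
    case True then show ?thesis using eE b by (simp add: xi_at_iff gmult_def)
  next
    case False
    then have "gmult \<sigma> (Neg e # \<beta>) = \<sigma> # Neg e # \<beta>" by (cases \<sigma>) (auto simp: gmult_def)
    then show ?thesis using False assms(2)
      by (cases \<sigma>) (auto simp: xi_at_iff gen_neg_child)
  qed
qed

lemma gen_xi_pos: assumes "chv ch" "Pos e # \<beta> \<in> gen v ch"
  shows "xi_at E1 (gen v ch) (Pos e # \<beta>) =
     {Neg (if X = cls C e then e else ch (Pos e # \<beta>) X) |X. X \<in> Cv r C (r e)}"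
proof (rule set_eqI)
  fix \<sigma>
  have eE: "e \<in> E1" using gen_reduced[OF assms(2) assms(1)] by (simp add: reduced_Cons)
  have b: "\<beta> \<in> gen v ch" using gen_tl[OF assms(2)] by simp
  have cv: "cls C e \<in> Cv r C (r e)" using cls_Cv[OF eE] .
  have chm: "Y \<in> Cv r C (r e) \<Longrightarrow> ch (Pos e # \<beta>) Y \<in> Y" for Y using chvD[OF assms(1) Cv_C] by blast
  have chE: "Y \<in> Cv r C (r e) \<Longrightarrow> ch (Pos e # \<beta>) Y \<in> E1" for Y using chm Cv_mem by blast
  have chne: "Y \<in> Cv r C (r e) \<Longrightarrow> Y \<noteq> cls C e \<Longrightarrow> ch (Pos e # \<beta>) Y \<noteq> e" for Y
    using chm cls_eq Cv_C by metis
  show "\<sigma> \<in> xi_at E1 (gen v ch) (Pos e # \<beta>) \<longleftrightarrow>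
     \<sigma> \<in> {Neg (if X = cls C e then e else ch (Pos e # \<beta>) X) |X. X \<in> Cv r C (r e)}"
  proof (cases "\<sigma> = Neg e")
    case True
    have "\<sigma> \<in> xi_at E1 (gen v ch) (Pos e # \<beta>)" using True eE b by (simp add: xi_at_iff gmult_def)
    moreover have "\<sigma> \<in> {Neg (if X = cls C e then e else ch (Pos e # \<beta>) X) |X. X \<in> Cv r C (r e)}"
      using True cv by force
    ultimately show ?thesis by simp
  next
    case False
    then have gm: "gmult \<sigma> (Pos e # \<beta>) = \<sigma> # Pos e # \<beta>" by (cases \<sigma>) (auto simp: gmult_def)
    show ?thesis
    proof
      assume "\<sigma> \<in> xi_at E1 (gen v ch) (Pos e # \<beta>)"
      then have "\<sigma> # Pos e # \<beta> \<in> gen v ch" using gm by (simp add: xi_at_iff)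
      then obtain Y where Y: "Y \<in> Cv r C (r e)" "Y \<noteq> cls C e" "\<sigma> = Neg (ch (Pos e # \<beta>) Y)"
        unfolding gen_pos_child by blast
      then show "\<sigma> \<in> {Neg (if X = cls C e then e else ch (Pos e # \<beta>) X) |X. X \<in> Cv r C (r e)}"
        by force
    next
      assume "\<sigma> \<in> {Neg (if X = cls C e then e else ch (Pos e # \<beta>) X) |X. X \<in> Cv r C (r e)}"
      then obtain X where X: "X \<in> Cv r C (r e)" "\<sigma> = Neg (if X = cls C e then e else ch (Pos e # \<beta>) X)"
        by blast
      then have Xn: "X \<noteq> cls C e" using False by auto
      then have s: "\<sigma> = Neg (ch (Pos e # \<beta>) X)" using X by simp
      have "\<sigma> # Pos e # \<beta> \<in> gen v ch" unfolding gen_pos_child using assms(2) X(1) Xn s by blast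
      then show "\<sigma> \<in> xi_at E1 (gen v ch) (Pos e # \<beta>)" using gm s chE[OF X(1)] by (simp add: xi_at_iff)
    qed
  qed
qed

lemma gen_Omega: assumes "chv ch" "v \<in> E00 \<union> E01" shows "gen v ch \<in> Om"
  unfolding Omega_def
proof (intro CollectI conjI ballI allI)
  show "gen v ch \<subseteq> Fgrp E1" using gen_reduced[OF _ assms(1)] unfolding Fgrp_def by blast
  show "[] \<in> gen v ch" by (rule gen.g_nil)
  fix \<alpha> k assume "\<alpha> \<in> gen v ch" then show "drop k \<alpha> \<in> gen v ch" by (rule gen_drop)
next
  fix \<alpha> assume a: "\<alpha> \<in> gen v ch"
  show "(\<exists>u\<in>E01. xi_at E1 (gen v ch) \<alpha> = Pos ` {e \<in> E1. s e = u}) \<or>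
        (\<exists>u\<in>E00. \<exists>f. (\<forall>X\<in>Cv r C u. f X \<in> X) \<and> xi_at E1 (gen v ch) \<alpha> = {Neg (f X) |X. X \<in> Cv r C u})"
  proof (cases \<alpha>)
    case Nil
    show ?thesis
    proof (cases "v \<in> E01")
      case True then show ?thesis using gen_xi_nil1[OF True] Nil by (intro disjI1 bexI[of _ v]) simp_all
    next
      case False
      then have vE: "v \<in> E00" using assms(2) by blast
      have "\<forall>X\<in>Cv r C v. ch [] X \<in> X" using chvD[OF assms(1) Cv_C] by blast
      then show ?thesis using gen_xi_nil0[OF assms(1) False] Nil vE
        by (intro disjI2 bexI[of _ v] exI[of _ "ch []"]) simp_all
    qed
  next
    case (Cons \<tau> \<beta>)
    show ?thesis
    proof (cases \<tau>)
      case (Pos e)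
      have ag: "Pos e # \<beta> \<in> gen v ch" using a Cons Pos by simp
      have eE: "e \<in> E1" using gen_reduced[OF ag assms(1)] by (simp add: reduced_Cons)
      define f where "f = (\<lambda>X. if X = cls C e then e else ch (Pos e # \<beta>) X)"
      have "\<forall>X\<in>Cv r C (r e). f X \<in> X"
        unfolding f_def using cls[OF eE] chvD[OF assms(1) Cv_C] by auto
      moreover have "xi_at E1 (gen v ch) \<alpha> = {Neg (f X) |X. X \<in> Cv r C (r e)}"
        unfolding f_def using gen_xi_pos[OF assms(1) ag] Cons Pos by simp
      ultimately show ?thesis using rE00[OF eE] by (intro disjI2 bexI[of _ "r e"] exI[of _ f]) simp_all
    next
      case (Neg e)
      have ag: "Neg e # \<beta> \<in> gen v ch" using a Cons Neg by simp
      have eE: "e \<in> E1" using gen_reduced[OF ag assms(1)] by (simp add: reduced_Cons)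
      show ?thesis using gen_xi_neg[OF assms(1) ag] Cons Neg sE01[OF eE] by (intro disjI1 bexI[of _ "s e"]) simp_all
    qed
  qed
qed

lemma OmV_iff: "\<xi> \<in> OmV v \<longleftrightarrow> \<xi> \<in> Om \<and>
   (if v \<in> E01 then (\<exists>e\<in>E1. s e = v \<and> [Pos e] \<in> \<xi>) else (\<exists>X\<in>Cv r C v. \<exists>e\<in>X. [Neg e] \<in> \<xi>))"
  unfolding Omega_v_def by auto

lemma gen_OmV: assumes "chv ch" "v \<in> E00 \<union> E01" shows "gen v ch \<in> OmV v"
proof -
  have O: "gen v ch \<in> Om" by (rule gen_Omega[OF assms])
  show ?thesis
  proof (cases "v \<in> E01")
    case True
    then obtain f where f: "f \<in> E1" "s f = v" using sE by (metis imageE)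
    then have "[Pos f] \<in> gen v ch" using gen.g_root1 True by blast
    then show ?thesis using O True f unfolding OmV_iff by auto
  next
    case False
    then have "v \<in> E00" using assms(2) by blast
    then obtain e where e: "e \<in> E1" "r e = v" using rE by (metis imageE)
    have X: "cls C e \<in> Cv r C v" using cls_Cv[OF e(1)] e(2) by simp
    have "[Neg (ch [] (cls C e))] \<in> gen v ch" using gen.g_root0[OF False X] .
    moreover have "ch [] (cls C e) \<in> cls C e" using chvD[OF assms(1) Cv_C[OF X]] .
    ultimately show ?thesis using O False X unfolding OmV_iff by auto
  qed
qed

end

context G begin

lemma om_sub: "\<xi> \<in> Om \<Longrightarrow> \<alpha> \<in> \<xi> \<Longrightarrow> reduced E1 \<alpha>"
  unfolding Omega_def Fgrp_def by blast

lemma om_nil: "\<xi> \<in> Om \<Longrightarrow> [] \<in> \<xi>"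
  unfolding Omega_def by blast

lemma om_drop: "\<xi> \<in> Om \<Longrightarrow> \<alpha> \<in> \<xi> \<Longrightarrow> drop k \<alpha> \<in> \<xi>"
  unfolding Omega_def by blast

lemma om_tl: "\<xi> \<in> Om \<Longrightarrow> \<alpha> \<in> \<xi> \<Longrightarrow> tl \<alpha> \<in> \<xi>"
  using om_drop[of \<xi> \<alpha> 1] by (simp add: drop_Suc)

lemma om_cond: "\<xi> \<in> Om \<Longrightarrow> \<alpha> \<in> \<xi> \<Longrightarrow>
   (\<exists>u\<in>E01. xi_at E1 \<xi> \<alpha> = Pos ` {e \<in> E1. s e = u}) \<or>
   (\<exists>u\<in>E00. \<exists>f. (\<forall>X\<in>Cv r C u. f X \<in> X) \<and> xi_at E1 \<xi> \<alpha> = {Neg (f X) |X. X \<in> Cv r C u})"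
  unfolding Omega_def by blast

lemma om_child: assumes "\<xi> \<in> Om" "\<sigma> # \<alpha> \<in> \<xi>" shows "\<sigma> \<in> xi_at E1 \<xi> \<alpha>"
proof -
  have R: "reduced E1 (\<sigma> # \<alpha>)" using om_sub[OF assms] .
  then have "\<sigma> \<in> letters E1" "\<alpha> = [] \<or> hd \<alpha> \<noteq> linv \<sigma>" by (auto simp: reduced_Cons)
  then show ?thesis using gmult_Cons[of \<alpha> \<sigma>] assms(2) by (simp add: xi_at_iff)
qed

lemma om_child_rev: "\<sigma> \<in> xi_at E1 \<xi> \<alpha> \<Longrightarrow> (\<alpha> = [] \<or> hd \<alpha> \<noteq> linv \<sigma>) \<Longrightarrow> \<sigma> # \<alpha> \<in> \<xi>"
  using gmult_Cons[of \<alpha> \<sigma>] by (simp add: xi_at_iff)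

lemma om_inv: assumes "\<xi> \<in> Om" "\<tau> # \<beta> \<in> \<xi>" shows "linv \<tau> \<in> xi_at E1 \<xi> (\<tau> # \<beta>)"
proof -
  have "\<tau> \<in> letters E1" using om_sub[OF assms] by (simp add: reduced_Cons)
  moreover have "\<beta> \<in> \<xi>" using om_tl[OF assms] by simp
  ultimately show ?thesis by (simp add: xi_at_iff gmult_inv linv_letters)
qed

lemma om_pos: assumes "\<xi> \<in> Om" "Pos e # \<beta> \<in> \<xi>"
  shows "\<exists>f. (\<forall>X\<in>Cv r C (r e). f X \<in> X) \<and> xi_at E1 \<xi> (Pos e # \<beta>) = {Neg (f X) |X. X \<in> Cv r C (r e)}"
proof -
  have N: "Neg e \<in> xi_at E1 \<xi> (Pos e # \<beta>)" using om_inv[OF assms] by simp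
  from om_cond[OF assms]
  show ?thesis
  proof
    assume "\<exists>u\<in>E01. xi_at E1 \<xi> (Pos e # \<beta>) = Pos ` {e \<in> E1. s e = u}"
    then obtain u where "xi_at E1 \<xi> (Pos e # \<beta>) = Pos ` {e \<in> E1. s e = u}" by blast
    then show ?thesis using N by auto
  next
    assume "\<exists>u\<in>E00. \<exists>f. (\<forall>X\<in>Cv r C u. f X \<in> X) \<and> xi_at E1 \<xi> (Pos e # \<beta>) = {Neg (f X) |X. X \<in> Cv r C u}"
    then obtain u f where f: "\<forall>X\<in>Cv r C u. f X \<in> X" "xi_at E1 \<xi> (Pos e # \<beta>) = {Neg (f X) |X. X \<in> Cv r C u}"
      by blast
    then obtain X where X: "X \<in> Cv r C u" "e = f X" using N by auto
    then have "r e = u" using f(1) Cv_mem by metis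
    then show ?thesis using f by blast
  qed
qed

lemma om_neg: assumes "\<xi> \<in> Om" "Neg e # \<beta> \<in> \<xi>"
  shows "xi_at E1 \<xi> (Neg e # \<beta>) = Pos ` {f \<in> E1. s f = s e}"
proof -
  have N: "Pos e \<in> xi_at E1 \<xi> (Neg e # \<beta>)" using om_inv[OF assms] by simp
  from om_cond[OF assms]
  show ?thesis
  proof
    assume "\<exists>u\<in>E01. xi_at E1 \<xi> (Neg e # \<beta>) = Pos ` {e \<in> E1. s e = u}"
    then obtain u where u: "xi_at E1 \<xi> (Neg e # \<beta>) = Pos ` {e \<in> E1. s e = u}" by blast
    then have "s e = u" using N by auto
    then show ?thesis using u by simp
  next
    assume "\<exists>u\<in>E00. \<exists>f. (\<forall>X\<in>Cv r C u. f X \<in> X) \<and> xi_at E1 \<xi> (Neg e # \<beta>) = {Neg (f X) |X. X \<in> Cv r C u}"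
    then obtain u f where f: "xi_at E1 \<xi> (Neg e # \<beta>) = {Neg (f X) |X. X \<in> Cv r C u}"
      by blast
    then show ?thesis using N by auto
  qed
qed

lemma om_root: assumes "\<xi> \<in> OmV v" "v \<in> E00 \<union> E01"
  shows "(v \<in> E01 \<and> xi_at E1 \<xi> [] = Pos ` {f \<in> E1. s f = v}) \<or>
         (v \<notin> E01 \<and> (\<exists>f. (\<forall>X\<in>Cv r C v. f X \<in> X) \<and> xi_at E1 \<xi> [] = {Neg (f X) |X. X \<in> Cv r C v}))"
proof -
  have O: "\<xi> \<in> Om" using assms(1) unfolding OmV_iff by blast
  have c: "(\<exists>u\<in>E01. xi_at E1 \<xi> [] = Pos ` {e \<in> E1. s e = u}) \<or>
   (\<exists>u\<in>E00. \<exists>f. (\<forall>X\<in>Cv r C u. f X \<in> X) \<and> xi_at E1 \<xi> [] = {Neg (f X) |X. X \<in> Cv r C u})"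
    using om_cond[OF O om_nil[OF O]] .
  show ?thesis
  proof (cases "v \<in> E01")
    case True
    then obtain e where e: "e \<in> E1" "s e = v" "[Pos e] \<in> \<xi>" using assms(1) unfolding OmV_iff by auto
    have P: "Pos e \<in> xi_at E1 \<xi> []" using om_child[OF O e(3)] .
    from c show ?thesis
    proof
      assume "\<exists>u\<in>E01. xi_at E1 \<xi> [] = Pos ` {e \<in> E1. s e = u}"
      then obtain u where u: "xi_at E1 \<xi> [] = Pos ` {e \<in> E1. s e = u}" by blast
      then have "u = v" using P e(2) by auto
      then show ?thesis using u True by simp
    next
      assume "\<exists>u\<in>E00. \<exists>f. (\<forall>X\<in>Cv r C u. f X \<in> X) \<and> xi_at E1 \<xi> [] = {Neg (f X) |X. X \<in> Cv r C u}"
      then obtain u f where "xi_at E1 \<xi> [] = {Neg (f X) |X. X \<in> Cv r C u}" by blast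
      then show ?thesis using P by auto
    qed
  next
    case False
    then obtain X e where e: "X \<in> Cv r C v" "e \<in> X" "[Neg e] \<in> \<xi>" using assms(1) unfolding OmV_iff by auto
    have P: "Neg e \<in> xi_at E1 \<xi> []" using om_child[OF O e(3)] .
    have re: "r e = v" using Cv_mem[OF e(1,2)] by simp
    from c show ?thesis
    proof
      assume "\<exists>u\<in>E01. xi_at E1 \<xi> [] = Pos ` {e \<in> E1. s e = u}"
      then obtain u where "xi_at E1 \<xi> [] = Pos ` {e \<in> E1. s e = u}" by blast
      then show ?thesis using P by auto
    next
      assume "\<exists>u\<in>E00. \<exists>f. (\<forall>X\<in>Cv r C u. f X \<in> X) \<and> xi_at E1 \<xi> [] = {Neg (f X) |X. X \<in> Cv r C u}"
      then obtain u f where f: "\<forall>X\<in>Cv r C u. f X \<in> X" "xi_at E1 \<xi> [] = {Neg (f X) |X. X \<in> Cv r C u}" by blast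
      then obtain X' where X': "X' \<in> Cv r C u" "e = f X'" using P by auto
      then have "r e = u" using f(1) Cv_mem by metis
      then have "u = v" using re by simp
      then show ?thesis using f False by blast
    qed
  qed
qed

definition ch_of :: "'e letter list set \<Rightarrow> 'e letter list \<Rightarrow> 'e set \<Rightarrow> 'e" where
  "ch_of \<xi> \<alpha> Y = (if \<exists>e\<in>Y. Neg e # \<alpha> \<in> \<xi> then (SOME e. e \<in> Y \<and> Neg e # \<alpha> \<in> \<xi>) else (SOME e. e \<in> Y))"

lemma chv_ch_of: "chv (ch_of \<xi>)"
  unfolding chv_def
proof (intro allI impI)
  fix \<alpha> Y assume Y: "Y \<in> C"
  show "ch_of \<xi> \<alpha> Y \<in> Y"
  proof (cases "\<exists>e\<in>Y. Neg e # \<alpha> \<in> \<xi>")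
    case True
    then have "\<exists>e. e \<in> Y \<and> Neg e # \<alpha> \<in> \<xi>" by blast
    then have "(SOME e. e \<in> Y \<and> Neg e # \<alpha> \<in> \<xi>) \<in> Y" using someI_ex by (metis (mono_tags, lifting))
    then show ?thesis using True by (simp add: ch_of_def)
  next
    case False
    have "\<exists>e. e \<in> Y" using C_ne[OF Y] by blast
    then have "(SOME e. e \<in> Y) \<in> Y" using someI_ex by metis
    then show ?thesis using False by (simp add: ch_of_def)
  qed
qed

lemma pick: assumes "\<xi> \<in> Om" "xi_at E1 \<xi> \<alpha> = {Neg (f X) |X. X \<in> Cv r C u}" "\<forall>X\<in>Cv r C u. f X \<in> X"
   "X \<in> Cv r C u" "e \<in> X" "Neg e # \<alpha> \<in> \<xi>"
  shows "ch_of \<xi> \<alpha> X = e"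
proof -
  have claim: "e' = f X" if "e' \<in> X" "Neg e' # \<alpha> \<in> \<xi>" for e'
  proof -
    have "Neg e' \<in> xi_at E1 \<xi> \<alpha>" using om_child[OF assms(1) that(2)] .
    then obtain X'' where X'': "X'' \<in> Cv r C u" "e' = f X''" using assms(2) by auto
    then have "e' \<in> X''" using assms(3) by simp
    then have "X = X''" using C_same[OF Cv_C[OF assms(4)] Cv_C[OF X''(1)] that(1)] by simp
    then show ?thesis using X'' by simp
  qed
  have ex: "\<exists>e. e \<in> X \<and> Neg e # \<alpha> \<in> \<xi>" using assms(5,6) by blast
  have "(SOME e. e \<in> X \<and> Neg e # \<alpha> \<in> \<xi>) \<in> X \<and> Neg (SOME e. e \<in> X \<and> Neg e # \<alpha> \<in> \<xi>) # \<alpha> \<in> \<xi>"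
    using someI_ex[OF ex] .
  then have "(SOME e. e \<in> X \<and> Neg e # \<alpha> \<in> \<xi>) = f X" using claim by blast
  moreover have "e = f X" using claim assms(5,6) by blast
  moreover have "ch_of \<xi> \<alpha> X = (SOME e. e \<in> X \<and> Neg e # \<alpha> \<in> \<xi>)"
    using assms(5,6) unfolding ch_of_def by (metis (mono_tags, lifting))
  ultimately show ?thesis by simp
qed

end

context G begin

lemma om_gen: assumes V: "\<xi> \<in> OmV v" "v \<in> E00 \<union> E01" shows "\<xi> = gen v (ch_of \<xi>)"
proof
  have O: "\<xi> \<in> Om" using V(1) unfolding OmV_iff by blast
  note root = om_root[OF V]
  show "gen v (ch_of \<xi>) \<subseteq> \<xi>"
  proof
    fix w assume "w \<in> gen v (ch_of \<xi>)"
    then show "w \<in> \<xi>"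
    proof (induction w rule: gen.induct)
      case g_nil then show ?case using om_nil[OF O] .
    next
      case (g_root1 f)
      then have "xi_at E1 \<xi> [] = Pos ` {f \<in> E1. s f = v}" using root by blast
      then have "Pos f \<in> xi_at E1 \<xi> []" using g_root1 by auto
      then show ?case using om_child_rev by blast
    next
      case (g_root0 X)
      then obtain f where f: "\<forall>X\<in>Cv r C v. f X \<in> X" "xi_at E1 \<xi> [] = {Neg (f X) |X. X \<in> Cv r C v}"
        using root by blast
      have "Neg (f X) \<in> xi_at E1 \<xi> []" using f(2) g_root0(2) by blast
      then have m: "[Neg (f X)] \<in> \<xi>" using om_child_rev by blast
      have "ch_of \<xi> [] X = f X" using pick[OF O f(2) f(1) g_root0(2)] f(1) g_root0(2) m by blast
      then show ?case using m by simp
    next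
      case (g_neg e \<beta> f)
      have "xi_at E1 \<xi> (Neg e # \<beta>) = Pos ` {f \<in> E1. s f = s e}" using om_neg[OF O g_neg.IH] .
      then have "Pos f \<in> xi_at E1 \<xi> (Neg e # \<beta>)" using g_neg.hyps by auto
      then show ?case using om_child_rev g_neg.hyps(4) by simp
    next
      case (g_pos e \<beta> Y)
      obtain f where f: "\<forall>X\<in>Cv r C (r e). f X \<in> X" "xi_at E1 \<xi> (Pos e # \<beta>) = {Neg (f X) |X. X \<in> Cv r C (r e)}"
        using om_pos[OF O g_pos.IH] by blast
      have "Neg (f Y) \<in> xi_at E1 \<xi> (Pos e # \<beta>)" using f(2) g_pos.hyps(2) by blast
      moreover have "f Y \<noteq> e"
      proof
        assume "f Y = e"
        then have "e \<in> Y" using f(1) g_pos.hyps(2) by metis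
        then have "cls C e = Y" using cls_eq[OF Cv_C[OF g_pos.hyps(2)]] by simp
        then show False using g_pos.hyps(3) by simp
      qed
      ultimately have m: "Neg (f Y) # Pos e # \<beta> \<in> \<xi>" using om_child_rev by simp
      have "ch_of \<xi> (Pos e # \<beta>) Y = f Y"
        using pick[OF O f(2) f(1) g_pos.hyps(2)] f(1) g_pos.hyps(2) m by blast
      then show ?case using m by simp
    qed
  qed
  show "\<xi> \<subseteq> gen v (ch_of \<xi>)"
  proof
    fix w assume "w \<in> \<xi>"
    then show "w \<in> gen v (ch_of \<xi>)"
    proof (induction w)
      case Nil show ?case by (rule gen.g_nil)
    next
      case (Cons \<sigma> \<alpha>)
      have a\<xi>: "\<alpha> \<in> \<xi>" using om_tl[OF O Cons.prems] by simp
      have ag: "\<alpha> \<in> gen v (ch_of \<xi>)" using Cons.IH[OF a\<xi>] .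
      have sx: "\<sigma> \<in> xi_at E1 \<xi> \<alpha>" using om_child[OF O Cons.prems] .
      have R: "\<alpha> \<noteq> [] \<Longrightarrow> hd \<alpha> \<noteq> linv \<sigma>" using om_sub[OF O Cons.prems] by (simp add: reduced_Cons)
      show ?case
      proof (cases \<alpha>)
        case Nil
        from root show ?thesis
        proof
          assume A: "v \<in> E01 \<and> xi_at E1 \<xi> [] = Pos ` {f \<in> E1. s f = v}"
          then obtain f where "f \<in> E1" "s f = v" "\<sigma> = Pos f" using sx Nil by auto
          then show ?thesis using gen.g_root1 A Nil by simp
        next
          assume A: "v \<notin> E01 \<and> (\<exists>f. (\<forall>X\<in>Cv r C v. f X \<in> X) \<and> xi_at E1 \<xi> [] = {Neg (f X) |X. X \<in> Cv r C v})"
          then obtain f where f: "\<forall>X\<in>Cv r C v. f X \<in> X" "xi_at E1 \<xi> [] = {Neg (f X) |X. X \<in> Cv r C v}" by blast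
          then obtain X where X: "X \<in> Cv r C v" "\<sigma> = Neg (f X)" using sx Nil by auto
          have "ch_of \<xi> [] X = f X" using pick[OF O f(2) f(1) X(1)] f(1) X Cons.prems Nil by simp
          then show ?thesis using gen.g_root0[OF _ X(1), of "ch_of \<xi>"] A X Nil by simp
        qed
      next
        case (Cons \<tau> \<beta>)
        show ?thesis
        proof (cases \<tau>)
          case (Pos e)
          have pe: "Pos e # \<beta> \<in> \<xi>" using a\<xi> Cons Pos by simp
          obtain f where f: "\<forall>X\<in>Cv r C (r e). f X \<in> X" "xi_at E1 \<xi> (Pos e # \<beta>) = {Neg (f X) |X. X \<in> Cv r C (r e)}"
            using om_pos[OF O pe] by blast
          obtain X where X: "X \<in> Cv r C (r e)" "\<sigma> = Neg (f X)" using sx Cons Pos f(2) by auto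
          have "Neg e \<in> xi_at E1 \<xi> (Pos e # \<beta>)" using om_inv[OF O pe] by simp
          then obtain X0 where X0: "X0 \<in> Cv r C (r e)" "e = f X0" using f(2) by auto
          have "cls C e = X0" using cls_eq[OF Cv_C[OF X0(1)]] f(1) X0 by metis
          then have fc: "f (cls C e) = e" using X0 by simp
          have Xn: "X \<noteq> cls C e"
          proof
            assume "X = cls C e"
            then have "\<sigma> = Neg e" using X fc by simp
            then show False using R Cons Pos by simp
          qed
          have "ch_of \<xi> (Pos e # \<beta>) X = f X"
            using pick[OF O f(2) f(1) X(1)] f(1) X Cons.prems Cons Pos by simp
          then have "\<sigma> = Neg (ch_of \<xi> (Pos e # \<beta>) X)" using X by simp
          then show ?thesis using gen.g_pos[OF _ X(1) Xn] ag Cons Pos by simp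
        next
          case (Neg e)
          have ne: "Neg e # \<beta> \<in> \<xi>" using a\<xi> Cons Neg by simp
          obtain f where f: "f \<in> E1" "s f = s e" "\<sigma> = Pos f" using sx om_neg[OF O ne] Cons Neg by auto
          have "f \<noteq> e" using R Cons Neg f(3) by auto
          then show ?thesis using gen.g_neg[of e \<beta> v "ch_of \<xi>" f] ag Cons Neg f by simp
        qed
      qed
    qed
  qed
qed

lemma gen_len_agree: assumes "\<forall>\<alpha> Y. length \<alpha> < L \<longrightarrow> ch \<alpha> Y = ch' \<alpha> Y" "w \<in> gen v ch" "length w \<le> L"
  shows "w \<in> gen v ch'"
  using assms(2,3)
proof (induction w rule: gen.induct)
  case g_nil show ?case by (rule gen.g_nil)
next
  case (g_root1 f) then show ?case by (simp add: gen.g_root1)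
next
  case (g_root0 X)
  then have "ch [] X = ch' [] X" using assms(1) by simp
  then show ?case using gen.g_root0[OF g_root0.hyps] by simp
next
  case (g_neg e \<beta> f)
  then show ?case using gen.g_neg by simp
next
  case (g_pos e \<beta> Y)
  have "length (Pos e # \<beta>) < L" using g_pos.prems by simp
  then have "ch (Pos e # \<beta>) Y = ch' (Pos e # \<beta>) Y" using assms(1) by blast
  moreover have "Pos e # \<beta> \<in> gen v ch'" using g_pos.IH g_pos.prems by simp
  ultimately show ?case using gen.g_pos[OF _ g_pos.hyps(2,3)] by simp
qed

lemma gen_mem_agree:
  assumes root: "v \<notin> E01 \<Longrightarrow> \<forall>X\<in>Cv r C v. ch [] X = ch' [] X"
    and pos: "\<And>e \<beta> Y. Pos e # \<beta> \<in> gen v ch \<Longrightarrow> Y \<in> Cv r C (r e) \<Longrightarrow> Y \<noteq> cls C e \<Longrightarrow>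
                 ch (Pos e # \<beta>) Y = ch' (Pos e # \<beta>) Y"
  shows "gen v ch = gen v ch'"
proof
  show "gen v ch \<subseteq> gen v ch'"
  proof
    fix w assume "w \<in> gen v ch"
    then show "w \<in> gen v ch'"
    proof (induction w rule: gen.induct)
      case g_nil show ?case by (rule gen.g_nil)
    next
      case (g_root1 f) then show ?case by (simp add: gen.g_root1)
    next
      case (g_root0 X)
      then have "ch [] X = ch' [] X" using root by simp
      then show ?case using gen.g_root0[OF g_root0.hyps] by simp
    next
      case (g_neg e \<beta> f)
      then show ?case using gen.g_neg by simp
    next
      case (g_pos e \<beta> Y)
      have "ch (Pos e # \<beta>) Y = ch' (Pos e # \<beta>) Y" using pos g_pos.hyps by blast
      then show ?case using gen.g_pos[OF g_pos.IH g_pos.hyps(2,3)] by simp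
    qed
  qed
  show "gen v ch' \<subseteq> gen v ch"
  proof
    fix w assume "w \<in> gen v ch'"
    then show "w \<in> gen v ch"
    proof (induction w rule: gen.induct)
      case g_nil show ?case by (rule gen.g_nil)
    next
      case (g_root1 f) then show ?case by (simp add: gen.g_root1)
    next
      case (g_root0 X)
      then have "ch [] X = ch' [] X" using root by simp
      then show ?case using gen.g_root0[OF g_root0.hyps, of ch] by simp
    next
      case (g_neg e \<beta> f)
      then show ?case using gen.g_neg by simp
    next
      case (g_pos e \<beta> Y)
      have "ch (Pos e # \<beta>) Y = ch' (Pos e # \<beta>) Y" using pos g_pos.hyps g_pos.IH by blast
      then show ?case using gen.g_pos[OF g_pos.IH g_pos.hyps(2,3)] by simp
    qed
  qed
qed

end


lemma two_le_card: "finite S \<Longrightarrow> a \<in> S \<Longrightarrow> b \<in> S \<Longrightarrow> a \<noteq> b \<Longrightarrow> 2 \<le> card S"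
proof -
  assume A: "finite S" "a \<in> S" "b \<in> S" "a \<noteq> b"
  have "card {a, b} \<le> card S" using A by (intro card_mono) auto
  then show ?thesis using A(4) by simp
qed

context G begin

definition pc :: "'e letter \<Rightarrow> 'e letter \<Rightarrow> bool" where
  "pc a b \<longleftrightarrow> lsrc r s a = lrng r s b \<and> \<not> (\<exists>e. a = Pos e \<and> b = Neg e) \<and>
      \<not> (\<exists>e f. a = Neg e \<and> b = Pos f \<and> cls C e = cls C f)"

lemma adm_Cons: "adm_word E1 r s C (a # w) \<longleftrightarrow> a \<in> letters E1 \<and> (w = [] \<or> (adm_word E1 r s C w \<and> pc a (hd w)))"
proof
  assume A: "adm_word E1 r s C (a # w)"
  show "a \<in> letters E1 \<and> (w = [] \<or> (adm_word E1 r s C w \<and> pc a (hd w)))"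
  proof (cases w)
    case Nil then show ?thesis using A by (simp add: adm_word_def)
  next
    case (Cons b u)
    have L: "set (a # w) \<subseteq> letters E1" using A by (simp add: adm_word_def)
    have I: "\<And>i. Suc i < length (a # w) \<Longrightarrow>
        lsrc r s ((a # w) ! i) = lrng r s ((a # w) ! Suc i) \<and>
        \<not> (\<exists>e. (a # w) ! i = Pos e \<and> (a # w) ! Suc i = Neg e) \<and>
        \<not> (\<exists>e f. (a # w) ! i = Neg e \<and> (a # w) ! Suc i = Pos f \<and> cls C e = cls C f)"
      using A unfolding adm_word_def by blast
    have "pc a (hd w)" using I[of 0] Cons unfolding pc_def by simp
    moreover have "adm_word E1 r s C w"
      unfolding adm_word_def
    proof (intro conjI)
      show "w \<noteq> []" using Cons by simp
      show "set w \<subseteq> letters E1" using L by simp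
      show "\<forall>i. Suc i < length w \<longrightarrow> lsrc r s (w ! i) = lrng r s (w ! Suc i) \<and>
        \<not> (\<exists>e. w ! i = Pos e \<and> w ! Suc i = Neg e) \<and>
        \<not> (\<exists>e f. w ! i = Neg e \<and> w ! Suc i = Pos f \<and> cls C e = cls C f)"
      proof (intro allI impI)
        fix i assume "Suc i < length w"
        then show "lsrc r s (w ! i) = lrng r s (w ! Suc i) \<and>
          \<not> (\<exists>e. w ! i = Pos e \<and> w ! Suc i = Neg e) \<and>
          \<not> (\<exists>e f. w ! i = Neg e \<and> w ! Suc i = Pos f \<and> cls C e = cls C f)"
          using I[of "Suc i"] by simp
      qed
    qed
    ultimately show ?thesis using L by simp
  qed
next
  assume A: "a \<in> letters E1 \<and> (w = [] \<or> (adm_word E1 r s C w \<and> pc a (hd w)))"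
  show "adm_word E1 r s C (a # w)"
  proof (cases w)
    case Nil then show ?thesis using A by (simp add: adm_word_def)
  next
    case (Cons b u)
    have W: "adm_word E1 r s C w" "pc a b" using A Cons by auto
    have L: "set w \<subseteq> letters E1" using W(1) by (simp add: adm_word_def)
    have I: "\<And>i. Suc i < length w \<Longrightarrow>
        lsrc r s (w ! i) = lrng r s (w ! Suc i) \<and>
        \<not> (\<exists>e. w ! i = Pos e \<and> w ! Suc i = Neg e) \<and>
        \<not> (\<exists>e f. w ! i = Neg e \<and> w ! Suc i = Pos f \<and> cls C e = cls C f)"
      using W(1) unfolding adm_word_def by blast
    show ?thesis
      unfolding adm_word_def
    proof (intro conjI)
      show "a # w \<noteq> []" by simp
      show "set (a # w) \<subseteq> letters E1" using L A by simp
      show "\<forall>i. Suc i < length (a # w) \<longrightarrow> lsrc r s ((a # w) ! i) = lrng r s ((a # w) ! Suc i) \<and>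
        \<not> (\<exists>e. (a # w) ! i = Pos e \<and> (a # w) ! Suc i = Neg e) \<and>
        \<not> (\<exists>e f. (a # w) ! i = Neg e \<and> (a # w) ! Suc i = Pos f \<and> cls C e = cls C f)"
      proof (intro allI impI)
        fix i assume i: "Suc i < length (a # w)"
        show "lsrc r s ((a # w) ! i) = lrng r s ((a # w) ! Suc i) \<and>
          \<not> (\<exists>e. (a # w) ! i = Pos e \<and> (a # w) ! Suc i = Neg e) \<and>
          \<not> (\<exists>e f. (a # w) ! i = Neg e \<and> (a # w) ! Suc i = Pos f \<and> cls C e = cls C f)"
        proof (cases i)
          case 0 then show ?thesis using W(2) Cons unfolding pc_def by simp
        next
          case (Suc j) then show ?thesis using I[of j] i by simp
        qed
      qed
    qed
  qed
qed

lemma adm_single: "a \<in> letters E1 \<Longrightarrow> adm_word E1 r s C [a]"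
  by (simp add: adm_Cons)

lemma adm_pair: "adm_word E1 r s C [a, b] \<longleftrightarrow> a \<in> letters E1 \<and> b \<in> letters E1 \<and> pc a b"
  by (auto simp: adm_Cons)

lemma adm_snoc: "adm_word E1 r s C w \<Longrightarrow> adm_word E1 r s C [last w, b] \<Longrightarrow> adm_word E1 r s C (w @ [b])"
proof (induction w rule: induct_list012)
  case 1 then show ?case by (simp add: adm_word_def)
next
  case (2 a) then show ?case by simp
next
  case (3 a c u)
  have A: "a \<in> letters E1" "adm_word E1 r s C (c # u)" "pc a c" using "3.prems"(1) by (auto simp: adm_Cons)
  have "adm_word E1 r s C ((c # u) @ [b])" using "3.IH"(2) A(2) "3.prems"(2) by simp
  then show ?case using A by (simp add: adm_Cons)
qed

lemma adm_suffix: "adm_word E1 r s C (u @ w) \<Longrightarrow> w \<noteq> [] \<Longrightarrow> adm_word E1 r s C w"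
proof (induction u)
  case (Cons a u)
  then show ?case by (cases "u @ w") (auto simp: adm_Cons)
qed simp

lemma adm_letters: "adm_word E1 r s C w \<Longrightarrow> set w \<subseteq> letters E1"
  by (simp add: adm_word_def)

abbreviation "DE \<equiv> dead_ends E1 r s C"
abbreviation "Abar \<equiv> dclosure E00 E01 E1 r s C DE"

lemma DE_letters: "DE \<subseteq> letters E1" by (auto simp: dead_ends_def)

lemma DE_iff: "\<sigma> \<in> DE \<longleftrightarrow> \<sigma> \<in> letters E1 \<and> \<not> (\<exists>w. choice_path E1 r s C w \<and> last w = \<sigma>)"
  by (simp add: dead_ends_def)

lemma D1: assumes "adm_word E1 r s C [\<tau>, \<sigma>]" "\<sigma> \<in> DE" shows "\<tau> \<in> DE"
proof (rule ccontr)
  assume n: "\<tau> \<notin> DE"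
  have "\<tau> \<in> letters E1" using assms(1) by (simp add: adm_pair)
  then obtain w where w: "choice_path E1 r s C w" "last w = \<tau>" using n DE_iff by blast
  have aw: "adm_word E1 r s C w" "w \<noteq> []" using w(1) by (auto simp: choice_path_def adm_word_def)
  have "adm_word E1 r s C (w @ [\<sigma>])" using adm_snoc[OF aw(1)] assms(1) w(2) by simp
  moreover have "hd (w @ [\<sigma>]) = hd w" using aw(2) by simp
  ultimately have "choice_path E1 r s C (w @ [\<sigma>])" using w(1) unfolding choice_path_def by simp
  moreover have "last (w @ [\<sigma>]) = \<sigma>" by simp
  ultimately show False using assms(2) DE_iff by blast
qed

lemma last_two: assumes "adm_word E1 r s C w" "last w = \<sigma>" "w \<noteq> [\<sigma>]"
  obtains \<tau> where "adm_word E1 r s C [\<tau>, \<sigma>]"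
proof -
  have ne: "w \<noteq> []" using assms(1) by (simp add: adm_word_def)
  then obtain u where u: "w = u @ [\<sigma>]" using assms(2) by (metis append_butlast_last_id)
  then have "u \<noteq> []" using assms(3) by auto
  then obtain u' \<tau> where "u = u' @ [\<tau>]" by (metis append_butlast_last_id)
  then have "w = u' @ [\<tau>, \<sigma>]" using u by simp
  then have "adm_word E1 r s C [\<tau>, \<sigma>]" using adm_suffix assms(1) by blast
  then show ?thesis using that by blast
qed

lemma D2a: assumes "e \<in> E1" "\<not> 2 \<le> card {f\<in>E1. s f = s e}" shows "Neg e \<in> DE"
proof (rule ccontr)
  assume "Neg e \<notin> DE"
  then obtain w where w: "choice_path E1 r s C w" "last w = Neg e" using DE_iff assms(1) by auto
  have aw: "adm_word E1 r s C w" using w(1) by (simp add: choice_path_def)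
  have "w \<noteq> [Neg e]" using w(1) by (auto simp: choice_path_def)
  then obtain \<tau> where t: "adm_word E1 r s C [\<tau>, Neg e]" using last_two[OF aw w(2)] by blast
  then have tl: "\<tau> \<in> letters E1" "pc \<tau> (Neg e)" by (auto simp: adm_pair)
  show False
  proof (cases \<tau>)
    case (Pos f)
    then have f: "f \<in> E1" "s f = s e" "f \<noteq> e" using tl unfolding pc_def by auto
    have "finite {f\<in>E1. s f = s e}" using finE1 by simp
    then have "2 \<le> card {f\<in>E1. s f = s e}" using two_le_card[of _ f e] f assms(1) by simp
    then show False using assms(2) by simp
  next
    case (Neg f)
    then have "f \<in> E1" "r f = s e" using tl unfolding pc_def by auto
    then show False using rs_ne assms(1) by blast
  qed
qed

lemma D2b: assumes "e \<in> E1" "\<not> 2 \<le> card (Cv r C (r e))" shows "Pos e \<in> DE"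
proof (rule ccontr)
  assume "Pos e \<notin> DE"
  then obtain w where w: "choice_path E1 r s C w" "last w = Pos e" using DE_iff assms(1) by auto
  have aw: "adm_word E1 r s C w" using w(1) by (simp add: choice_path_def)
  have c: "cls C e \<in> Cv r C (r e)" using cls_Cv[OF assms(1)] .
  show False
  proof (cases "w = [Pos e]")
    case True
    then obtain X where X: "X \<in> Cv r C (r e)" "X \<noteq> cls C e" using w(1) by (auto simp: choice_path_def)
    then have "2 \<le> card (Cv r C (r e))" using two_le_card[OF finCv X(1) c X(2)] by simp
    then show False using assms(2) by simp
  next
    case False
    then obtain \<tau> where t: "adm_word E1 r s C [\<tau>, Pos e]" using last_two[OF aw w(2)] by blast
    then have tl: "\<tau> \<in> letters E1" "pc \<tau> (Pos e)" by (auto simp: adm_pair)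
    show False
    proof (cases \<tau>)
      case (Neg g)
      then have g: "g \<in> E1" "r g = r e" "cls C g \<noteq> cls C e" using tl unfolding pc_def by auto
      have "cls C g \<in> Cv r C (r e)" using cls_Cv[OF g(1)] g(2) by simp
      then have "2 \<le> card (Cv r C (r e))" using two_le_card[OF finCv _ c g(3)] by simp
      then show False using assms(2) by simp
    next
      case (Pos g)
      then have "g \<in> E1" "s g = r e" using tl unfolding pc_def by auto
      then show False using rs_ne assms(1) by metis
    qed
  qed
qed

lemma D3: assumes "Pos e \<in> DE" "Y \<in> Cv r C (r e)" "Y \<noteq> cls C e" shows "\<not> 2 \<le> card Y"
proof
  assume "2 \<le> card Y"
  have eE: "e \<in> E1" using assms(1) DE_letters by auto
  have "choice_path E1 r s C [Pos e]"
    unfolding choice_path_def using adm_single[of "Pos e"] eE assms(2,3) \<open>2 \<le> card Y\<close> by auto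
  then show False using assms(1) DE_iff by fastforce
qed

end

context G begin

abbreviation "dcl \<equiv> dclosed E00 E01 E1 r s C"

lemma dclosed_Inter: assumes "\<forall>B\<in>F. dcl B" shows "dcl (\<Inter>F)"
  unfolding dclosed_def
proof (intro conjI ballI impI allI)
  fix v e assume v: "v \<in> E01" "2 \<le> card {e\<in>E1. s e = v}" "e \<in> E1" "s e = v"
     "Pos ` ({f\<in>E1. s f = v} - {e}) \<subseteq> \<Inter>F"
  show "Neg e \<in> \<Inter>F"
  proof
    fix B assume B: "B \<in> F"
    have "Pos ` ({f\<in>E1. s f = v} - {e}) \<subseteq> B" using v(5) B by blast
    then show "Neg e \<in> B" using assms B v(1-4) unfolding dclosed_def by blast
  qed
next
  fix v X assume v: "v \<in> E00" "2 \<le> card (Cv r C v)" "X \<in> Cv r C v"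
     "\<forall>Y\<in>Cv r C v - {X}. Neg ` Y \<inter> \<Inter>F \<noteq> {}"
  show "Pos ` X \<subseteq> \<Inter>F"
  proof
    fix x assume x: "x \<in> Pos ` X"
    show "x \<in> \<Inter>F"
    proof
      fix B assume B: "B \<in> F"
      have "\<forall>Y\<in>Cv r C v - {X}. Neg ` Y \<inter> B \<noteq> {}" using v(4) B by blast
      then have "Pos ` X \<subseteq> B" using assms B v(1-3) unfolding dclosed_def by blast
      then show "x \<in> B" using x by blast
    qed
  qed
qed

lemma dcl_letters: "dcl (letters E1)"
  unfolding dclosed_def
proof (intro conjI ballI impI allI)
  fix v e assume "e \<in> E1" then show "Neg e \<in> letters E1" by simp
next
  fix v X assume "X \<in> Cv r C v"
  then have "X \<subseteq> E1" using C_sub Cv_C by blast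
  then show "Pos ` X \<subseteq> letters E1" by (auto simp: letters_def)
qed

lemma Abar_props: "dcl Abar" "Abar \<subseteq> letters E1" "DE \<subseteq> Abar"
proof -
  let ?F = "{B. B \<subseteq> letters E1 \<and> DE \<subseteq> B \<and> dcl B}"
  have "Abar = \<Inter>?F" by (simp add: dclosure_def)
  moreover have "letters E1 \<in> ?F" using dcl_letters DE_letters by simp
  ultimately show "dcl Abar" "Abar \<subseteq> letters E1" "DE \<subseteq> Abar"
    using dclosed_Inter[of ?F] by auto
qed

lemma Abar_least: "B \<subseteq> letters E1 \<Longrightarrow> DE \<subseteq> B \<Longrightarrow> dcl B \<Longrightarrow> Abar \<subseteq> B"
  unfolding dclosure_def by blast

definition Phi :: "'e letter set \<Rightarrow> 'e letter set" where
  "Phi A = A \<union> {Neg e |e. e \<in> E1 \<and> 2 \<le> card {f\<in>E1. s f = s e} \<and> Pos ` ({f\<in>E1. s f = s e} - {e}) \<subseteq> A}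
     \<union> {Pos e |e. e \<in> E1 \<and> 2 \<le> card (Cv r C (r e)) \<and> (\<forall>Y\<in>Cv r C (r e) - {cls C e}. Neg ` Y \<inter> A \<noteq> {})}"

definition Ast :: "nat \<Rightarrow> 'e letter set" where
  "Ast n = (Phi ^^ n) DE"

lemma Ast_0: "Ast 0 = DE" by (simp add: Ast_def)
lemma Ast_Suc: "Ast (Suc n) = Phi (Ast n)" by (simp add: Ast_def)

lemma Ast_mono: "m \<le> n \<Longrightarrow> Ast m \<subseteq> Ast n"
proof (induction n)
  case 0 then show ?case by simp
next
  case (Suc n)
  show ?case
  proof (cases "m = Suc n")
    case False
    then have "Ast m \<subseteq> Ast n" using Suc by simp
    then show ?thesis unfolding Ast_Suc Phi_def by blast
  qed simp
qed

lemma Phi_Abar: assumes "A \<subseteq> Abar" shows "Phi A \<subseteq> Abar"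
proof -
  note cl = Abar_props(1)[unfolded dclosed_def]
  have "Neg e \<in> Abar" if e: "e \<in> E1" "2 \<le> card {f\<in>E1. s f = s e}" "Pos ` ({f\<in>E1. s f = s e} - {e}) \<subseteq> A" for e
  proof -
    have "Pos ` ({f\<in>E1. s f = s e} - {e}) \<subseteq> Abar" using e(3) assms by blast
    then show ?thesis using cl sE01[OF e(1)] e(1,2) by blast
  qed
  moreover have "Pos e \<in> Abar" if e: "e \<in> E1" "2 \<le> card (Cv r C (r e))" "\<forall>Y\<in>Cv r C (r e) - {cls C e}. Neg ` Y \<inter> A \<noteq> {}" for e
  proof -
    have "\<forall>Y\<in>Cv r C (r e) - {cls C e}. Neg ` Y \<inter> Abar \<noteq> {}" using e(3) assms by blast
    then have "Pos ` cls C e \<subseteq> Abar" using cl rE00[OF e(1)] e(2) cls_Cv[OF e(1)] by blast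
    then show ?thesis using cls[OF e(1)] by blast
  qed
  ultimately show ?thesis using assms unfolding Phi_def by blast
qed

lemma Ast_Abar: "Ast n \<subseteq> Abar"
proof (induction n)
  case 0 then show ?case using Abar_props(3) by (simp add: Ast_0)
next
  case (Suc n) then show ?case using Phi_Abar by (simp add: Ast_Suc)
qed

lemma fin_chain: "finite F \<Longrightarrow> F \<subseteq> (\<Union>n. Ast n) \<Longrightarrow> \<exists>n. F \<subseteq> Ast n"
proof (induction F rule: finite_induct)
  case empty then show ?case by simp
next
  case (insert x F)
  then obtain n where n: "F \<subseteq> Ast n" by blast
  obtain m where m: "x \<in> Ast m" using insert.prems by blast
  have "F \<subseteq> Ast (max m n)" using n Ast_mono[of n "max m n"] by simp
  moreover have "x \<in> Ast (max m n)" using m Ast_mono[of m "max m n"] by auto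
  ultimately show ?case by blast
qed

lemma Union_dcl: "dcl (\<Union>n. Ast n)"
  unfolding dclosed_def
proof (intro conjI ballI impI allI)
  fix v e assume v: "v \<in> E01" "2 \<le> card {e\<in>E1. s e = v}" "e \<in> E1" "s e = v"
     "Pos ` ({f\<in>E1. s f = v} - {e}) \<subseteq> (\<Union>n. Ast n)"
  have "finite (Pos ` ({f\<in>E1. s f = v} - {e}))" using finE1 by simp
  then obtain n where n: "Pos ` ({f\<in>E1. s f = v} - {e}) \<subseteq> Ast n" using fin_chain v(5) by blast
  have "Neg e \<in> Phi (Ast n)" unfolding Phi_def using v(2,3,4) n by blast
  then show "Neg e \<in> (\<Union>n. Ast n)" unfolding Ast_Suc[symmetric] by blast
next
  fix v X assume v: "v \<in> E00" "2 \<le> card (Cv r C v)" "X \<in> Cv r C v"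
     "\<forall>Y\<in>Cv r C v - {X}. Neg ` Y \<inter> (\<Union>n. Ast n) \<noteq> {}"
  define w where "w = (\<lambda>Y. SOME \<sigma>. \<sigma> \<in> Neg ` Y \<inter> (\<Union>n. Ast n))"
  have w: "w Y \<in> Neg ` Y \<inter> (\<Union>n. Ast n)" if "Y \<in> Cv r C v - {X}" for Y
    unfolding w_def using v(4) that by (metis (no_types, lifting) ex_in_conv someI_ex)
  have "finite (w ` (Cv r C v - {X}))" using finCv by simp
  moreover have "w ` (Cv r C v - {X}) \<subseteq> (\<Union>n. Ast n)" using w by blast
  ultimately obtain n where n: "w ` (Cv r C v - {X}) \<subseteq> Ast n" using fin_chain by blast
  have all: "\<forall>Y\<in>Cv r C v - {X}. Neg ` Y \<inter> Ast n \<noteq> {}"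
  proof
    fix Y assume Y: "Y \<in> Cv r C v - {X}"
    then have "w Y \<in> Neg ` Y \<inter> Ast n" using w[OF Y] n by blast
    then show "Neg ` Y \<inter> Ast n \<noteq> {}" by blast
  qed
  show "Pos ` X \<subseteq> (\<Union>n. Ast n)"
  proof
    fix x assume "x \<in> Pos ` X"
    then obtain e where e: "e \<in> X" "x = Pos e" by blast
    have re: "r e = v" "e \<in> E1" using Cv_mem[OF v(3) e(1)] by auto
    have ce: "cls C e = X" using cls_eq[OF Cv_C[OF v(3)] e(1)] .
    have "Pos e \<in> Phi (Ast n)" unfolding Phi_def using re v(2) all ce by auto
    then show "x \<in> (\<Union>n. Ast n)" using e(2) unfolding Ast_Suc[symmetric] by blast
  qed
qed

lemma Abar_Union: "Abar \<subseteq> (\<Union>n. Ast n)"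
proof (rule Abar_least)
  show "(\<Union>n. Ast n) \<subseteq> letters E1" using Ast_Abar Abar_props(2) by blast
  show "DE \<subseteq> (\<Union>n. Ast n)" using Ast_0 by blast
  show "dcl (\<Union>n. Ast n)" by (rule Union_dcl)
qed

lemma Abar_bound: "\<exists>N. Abar \<subseteq> Ast N"
proof -
  have "finite Abar" using Abar_props(2) letters_finite[OF finE1] finite_subset by blast
  then show ?thesis using fin_chain Abar_Union by blast
qed

definition rank :: "'e letter \<Rightarrow> nat" where
  "rank \<sigma> = (LEAST n. \<sigma> \<in> Ast n)"

lemma rank: "\<sigma> \<in> Ast n \<Longrightarrow> \<sigma> \<in> Ast (rank \<sigma>) \<and> rank \<sigma> \<le> n"
  unfolding rank_def by (metis LeastI Least_le)

lemma rank_Suc: assumes "\<sigma> \<in> Ast n" "rank \<sigma> = Suc k" shows "\<sigma> \<in> Phi (Ast k)" "\<sigma> \<notin> Ast k"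
proof -
  show "\<sigma> \<in> Phi (Ast k)" using rank[OF assms(1)] assms(2) by (simp add: Ast_Suc)
  show "\<sigma> \<notin> Ast k"
  proof
    assume "\<sigma> \<in> Ast k"
    then have "rank \<sigma> \<le> k" using rank by blast
    then show False using assms(2) by simp
  qed
qed

lemma rank_Neg: assumes "Neg e \<in> Ast n" "rank (Neg e) = Suc k"
  shows "Pos ` ({f\<in>E1. s f = s e} - {e}) \<subseteq> Ast k"
  using rank_Suc[OF assms] unfolding Phi_def by blast

lemma rank_Pos: assumes "Pos e \<in> Ast n" "rank (Pos e) = Suc k"
  shows "\<forall>Y\<in>Cv r C (r e) - {cls C e}. Neg ` Y \<inter> Ast k \<noteq> {}"
  using rank_Suc[OF assms] unfolding Phi_def by blast

end

context G begin

definition pk :: "'e set \<Rightarrow> 'e" where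
  "pk Y = (if \<exists>e\<in>Y. Neg e \<in> Abar
     then (SOME e. (e \<in> Y \<and> Neg e \<in> Abar) \<and> (\<forall>e'. e' \<in> Y \<and> Neg e' \<in> Abar \<longrightarrow> rank (Neg e) \<le> rank (Neg e')))
     else (SOME e. e \<in> Y))"

lemma pk_good: assumes "e' \<in> Y" "Neg e' \<in> Abar"
  shows "pk Y \<in> Y \<and> Neg (pk Y) \<in> Abar \<and> rank (Neg (pk Y)) \<le> rank (Neg e')"
proof -
  define P where "P = (\<lambda>e. (e \<in> Y \<and> Neg e \<in> Abar) \<and> (\<forall>e'. e' \<in> Y \<and> Neg e' \<in> Abar \<longrightarrow> rank (Neg e) \<le> rank (Neg e')))"
  have "\<exists>x. P x"
    using ex_has_least_nat[of "\<lambda>e. e \<in> Y \<and> Neg e \<in> Abar" e' "\<lambda>e. rank (Neg e)"] assms unfolding P_def by blast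
  then have S: "P (SOME e. P e)" by (rule someI_ex)
  have "\<exists>e\<in>Y. Neg e \<in> Abar" using assms by blast
  then have "pk Y = (SOME e. P e)" unfolding pk_def P_def by simp
  then show ?thesis using S assms unfolding P_def by simp
qed

lemma pk_mem: assumes "Y \<in> C" shows "pk Y \<in> Y"
proof (cases "\<exists>e\<in>Y. Neg e \<in> Abar")
  case True then show ?thesis using pk_good by blast
next
  case False
  have "\<exists>e. e \<in> Y" using C_ne[OF assms] by blast
  then have "(SOME e. e \<in> Y) \<in> Y" by (rule someI_ex)
  then show ?thesis using False unfolding pk_def by simp
qed

definition ch0 :: "'e letter list \<Rightarrow> 'e set \<Rightarrow> 'e" where "ch0 \<alpha> Y = pk Y"

lemma chv_ch0: "chv ch0" unfolding chv_def ch0_def using pk_mem by blast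

lemma Vset_iff: "v \<in> Vset E00 E01 E1 r s C DE \<longleftrightarrow>
   (v \<in> E00 \<and> (\<forall>X\<in>Cv r C v. Neg ` X \<inter> Abar \<noteq> {})) \<or> (v \<in> E01 \<and> Pos ` {e\<in>E1. s e = v} \<subseteq> Abar)"
  unfolding Vset_def by blast

lemma Abar_rank: assumes N: "Abar \<subseteq> Ast N" "\<sigma> \<in> Abar" shows "\<sigma> \<in> Ast (rank \<sigma>)" "rank \<sigma> \<le> N"
  using rank[of \<sigma> N] N by auto

lemma rank0_DE: assumes "\<sigma> \<in> Abar" "Abar \<subseteq> Ast N" "\<sigma> \<notin> DE" shows "\<exists>k. rank \<sigma> = Suc k"
proof -
  have "\<sigma> \<in> Ast (rank \<sigma>)" using Abar_rank assms by blast
  then have "rank \<sigma> \<noteq> 0" using assms(3) Ast_0 by (metis)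
  then show ?thesis by (cases "rank \<sigma>") auto
qed

lemma claimQ: assumes V: "v \<in> Vset E00 E01 E1 r s C DE" and N: "Abar \<subseteq> Ast N"
  and "\<alpha> \<in> gen v ch0" "\<alpha> \<noteq> []"
  shows "hd \<alpha> \<in> Abar \<and> (hd \<alpha> \<in> DE \<or> rank (hd \<alpha>) + length \<alpha> \<le> N + 1)"
  using assms(3,4)
proof (induction \<alpha> rule: gen.induct)
  case g_nil then show ?case by simp
next
  case (g_root1 f)
  have "v \<notin> E00" using g_root1.hyps(1) disj by blast
  then have "Pos ` {e\<in>E1. s e = v} \<subseteq> Abar" using V unfolding Vset_iff by blast
  then have "Pos f \<in> Abar" using g_root1.hyps by blast
  then show ?case using Abar_rank[OF N] by fastforce
next
  case (g_root0 X)
  have "\<forall>X\<in>Cv r C v. Neg ` X \<inter> Abar \<noteq> {}" using V g_root0.hyps(1) unfolding Vset_iff by blast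
  then obtain e' where "e' \<in> X" "Neg e' \<in> Abar" using g_root0.hyps(2) by blast
  then have "Neg (pk X) \<in> Abar" using pk_good by blast
  then show ?case using Abar_rank[OF N] by (fastforce simp: ch0_def)
next
  case (g_neg e \<beta> f)
  have IH: "Neg e \<in> Abar" "Neg e \<in> DE \<or> rank (Neg e) + length (Neg e # \<beta>) \<le> N + 1" using g_neg.IH by auto
  have eE: "e \<in> E1" using IH(1) Abar_props(2) by auto
  have adm: "adm_word E1 r s C [Pos f, Neg e]"
    unfolding adm_pair pc_def using eE g_neg.hyps by simp
  show ?case
  proof (cases "Neg e \<in> DE")
    case True
    then have "Pos f \<in> DE" using D1[OF adm] by blast
    then show ?thesis using Abar_props(3) by auto
  next
    case False
    then obtain k where k: "rank (Neg e) = Suc k" using rank0_DE[OF IH(1) N] by blast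
    have "Neg e \<in> Ast N" using IH(1) N by blast
    then have "Pos ` ({f\<in>E1. s f = s e} - {e}) \<subseteq> Ast k" using rank_Neg k by blast
    then have pf: "Pos f \<in> Ast k" using g_neg.hyps by blast
    then have "Pos f \<in> Abar" using Ast_Abar by blast
    moreover have "rank (Pos f) \<le> k" using rank[OF pf] by blast
    ultimately show ?thesis using IH(2) False k by simp
  qed
next
  case (g_pos e \<beta> Y)
  have IH: "Pos e \<in> Abar" "Pos e \<in> DE \<or> rank (Pos e) + length (Pos e # \<beta>) \<le> N + 1" using g_pos.IH by auto
  have eE: "e \<in> E1" using IH(1) Abar_props(2) by auto
  have YC: "Y \<in> C" using Cv_C[OF g_pos.hyps(2)] .
  have pY: "pk Y \<in> Y" using pk_mem[OF YC] .
  have pE: "pk Y \<in> E1" "r (pk Y) = r e" using Cv_mem[OF g_pos.hyps(2) pY] by auto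
  have cY: "cls C (pk Y) = Y" using cls_eq[OF YC pY] .
  have adm: "adm_word E1 r s C [Neg (pk Y), Pos e]"
    unfolding adm_pair pc_def using eE pE cY g_pos.hyps(3) by simp
  show ?case
  proof (cases "Pos e \<in> DE")
    case True
    then have "Neg (pk Y) \<in> DE" using D1[OF adm] by blast
    then show ?thesis using Abar_props(3) by (auto simp: ch0_def)
  next
    case False
    then obtain k where k: "rank (Pos e) = Suc k" using rank0_DE[OF IH(1) N] by blast
    have "Pos e \<in> Ast N" using IH(1) N by blast
    then have "\<forall>Y\<in>Cv r C (r e) - {cls C e}. Neg ` Y \<inter> Ast k \<noteq> {}" using rank_Pos k by blast
    then obtain e' where e': "e' \<in> Y" "Neg e' \<in> Ast k" using g_pos.hyps(2,3) by blast
    have "Neg e' \<in> Abar" "rank (Neg e') \<le> k" using Ast_Abar e'(2) rank[OF e'(2)] by auto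
    then have "Neg (pk Y) \<in> Abar" "rank (Neg (pk Y)) \<le> k" using pk_good[OF e'(1)] by auto
    then show ?thesis using IH(2) False k by (simp add: ch0_def)
  qed
qed

lemma partA: assumes v: "v \<in> E00 \<union> E01" and V: "v \<in> Vset E00 E01 E1 r s C DE"
  shows "\<exists>\<xi>\<in>OmV v. openin (subtopology set_top (OmV v)) {\<xi>}"
proof -
  obtain N where N: "Abar \<subseteq> Ast N" using Abar_bound by blast
  define \<xi>0 where "\<xi>0 = gen v ch0"
  have x0: "\<xi>0 \<in> OmV v" unfolding \<xi>0_def using gen_OmV[OF chv_ch0 v] .
  define F where "F = {w. set w \<subseteq> letters E1 \<and> length w \<le> N + 2}"
  have fF: "finite F" unfolding F_def using finite_lists_length_le[OF letters_finite[OF finE1]] .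
  have inF: "w \<in> \<xi>0 \<Longrightarrow> length w \<le> N + 2 \<Longrightarrow> w \<in> F" for w
    using gen_reduced[OF _ chv_ch0] unfolding \<xi>0_def F_def reduced_def by blast
  have iso: "\<forall>\<eta>\<in>OmV v. (\<forall>w\<in>F. (w \<in> \<eta>) = (w \<in> \<xi>0)) \<longrightarrow> \<eta> = \<xi>0"
  proof (intro ballI impI)
    fix \<eta> assume e: "\<eta> \<in> OmV v" and ag: "\<forall>w\<in>F. (w \<in> \<eta>) = (w \<in> \<xi>0)"
    have O: "\<eta> \<in> Om" using e unfolding OmV_iff by blast
    have eg: "\<eta> = gen v (ch_of \<eta>)" using om_gen[OF e v] .
    have "gen v ch0 = gen v (ch_of \<eta>)"
    proof (rule gen_mem_agree)
      assume nv: "v \<notin> E01"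
      show "\<forall>X\<in>Cv r C v. ch0 [] X = ch_of \<eta> [] X"
      proof
        fix X assume X: "X \<in> Cv r C v"
        have m: "[Neg (ch0 [] X)] \<in> \<xi>0" unfolding \<xi>0_def using gen.g_root0[OF nv X] .
        then have m': "[Neg (ch0 [] X)] \<in> \<eta>" using ag inF[OF m] by simp
        obtain f where f: "\<forall>X\<in>Cv r C v. f X \<in> X" "xi_at E1 \<eta> [] = {Neg (f X) |X. X \<in> Cv r C v}"
          using om_root[OF e v] nv by blast
        have "ch0 [] X \<in> X" using chvD[OF chv_ch0 Cv_C[OF X]] .
        then show "ch0 [] X = ch_of \<eta> [] X" using pick[OF O f(2) f(1) X _ m'] by simp
      qed
    next
      fix e \<beta> Y assume pe: "Pos e # \<beta> \<in> gen v ch0" and Y: "Y \<in> Cv r C (r e)" "Y \<noteq> cls C e"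
      show "ch0 (Pos e # \<beta>) Y = ch_of \<eta> (Pos e # \<beta>) Y"
      proof (cases "length (Pos e # \<beta>) \<le> N + 1")
        case True
        have m: "Neg (ch0 (Pos e # \<beta>) Y) # Pos e # \<beta> \<in> \<xi>0" unfolding \<xi>0_def using gen.g_pos[OF pe Y] .
        then have m': "Neg (ch0 (Pos e # \<beta>) Y) # Pos e # \<beta> \<in> \<eta>" using ag inF[OF m] True by simp
        have pe': "Pos e # \<beta> \<in> \<eta>" using om_tl[OF O m'] by simp
        obtain f where f: "\<forall>X\<in>Cv r C (r e). f X \<in> X" "xi_at E1 \<eta> (Pos e # \<beta>) = {Neg (f X) |X. X \<in> Cv r C (r e)}"
          using om_pos[OF O pe'] by blast
        have "ch0 (Pos e # \<beta>) Y \<in> Y" using chvD[OF chv_ch0 Cv_C[OF Y(1)]] .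
        then show ?thesis using pick[OF O f(2) f(1) Y(1) _ m'] by simp
      next
        case False
        have "Pos e \<in> Abar \<and> (Pos e \<in> DE \<or> rank (Pos e) + length (Pos e # \<beta>) \<le> N + 1)"
          using claimQ[OF V N pe] by simp
        then have "Pos e \<in> DE" using False by auto
        then have c: "\<not> 2 \<le> card Y" using D3 Y by blast
        have YC: "Y \<in> C" using Cv_C[OF Y(1)] .
        show ?thesis using card1[OF YC c chvD[OF chv_ch0 YC] chvD[OF chv_ch_of YC]] .
      qed
    qed
    then show "\<eta> = \<xi>0" using eg unfolding \<xi>0_def by simp
  qed
  have "openin (subtopology set_top (OmV v)) {\<xi>0}"
    unfolding iso_set_top using x0 fF iso by blast
  then show ?thesis using x0 by blast
qed

end

context G begin

definition cnode :: "'e letter list \<Rightarrow> bool" where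
  "cnode \<beta> \<longleftrightarrow> (\<exists>e \<gamma> Y. \<beta> = Pos e # \<gamma> \<and> Y \<in> Cv r C (r e) \<and> Y \<noteq> cls C e \<and> 2 \<le> card Y)"

lemma follow: assumes "adm_word E1 r s C w" "\<alpha> \<in> gen v ch" "\<alpha> \<noteq> []" "hd \<alpha> = last w" "chv ch"
  shows "(\<exists>\<beta>\<in>gen v ch. length \<alpha> \<le> length \<beta> \<and> cnode \<beta>) \<or>
         (\<exists>\<beta>\<in>gen v ch. length \<alpha> \<le> length \<beta> \<and> \<beta> \<noteq> [] \<and> hd \<beta> = hd w)"
  using assms(1,4)
proof (induction w rule: induct_list012)
  case 1 then show ?case by (simp add: adm_word_def)
next
  case (2 a) then show ?case using assms(2,3) by auto
next
  case (3 a b u)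
  have A: "a \<in> letters E1" "adm_word E1 r s C (b # u)" "pc a b" using "3.prems"(1) by (auto simp: adm_Cons)
  have "hd \<alpha> = last (b # u)" using "3.prems"(2) by simp
  then have IH: "(\<exists>\<beta>\<in>gen v ch. length \<alpha> \<le> length \<beta> \<and> cnode \<beta>) \<or>
         (\<exists>\<beta>\<in>gen v ch. length \<alpha> \<le> length \<beta> \<and> \<beta> \<noteq> [] \<and> hd \<beta> = b)"
    using "3.IH"(2) A(2) by simp
  show ?case
  proof (cases "\<exists>\<beta>\<in>gen v ch. length \<alpha> \<le> length \<beta> \<and> cnode \<beta>")
    case True then show ?thesis by blast
  next
    case False
    then obtain \<beta> where b: "\<beta> \<in> gen v ch" "length \<alpha> \<le> length \<beta>" "\<beta> \<noteq> []" "hd \<beta> = b" using IH by blast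
    then obtain \<gamma> where bg: "\<beta> = b # \<gamma>" by (cases \<beta>) auto
    have bl: "b \<in> letters E1" using gen_reduced[OF b(1) assms(5)] bg by (simp add: reduced_Cons)
    show ?thesis
    proof (cases b)
      case (Neg e)
      have eE: "e \<in> E1" using bl Neg by simp
      show ?thesis
      proof (cases a)
        case (Pos f)
        have f: "f \<in> E1" "s f = s e" "f \<noteq> e" using A(1,3) Pos Neg unfolding pc_def by auto
        have "Pos f # \<beta> \<in> gen v ch" using gen.g_neg[of e \<gamma> v ch f] b(1) bg Neg f by simp
        then show ?thesis using b(2) Pos by (intro disjI2 bexI[of _ "Pos f # \<beta>"]) auto
      next
        case (Neg f)
        have "f \<in> E1" "r f = s e" using A(1,3) Neg \<open>b = Neg e\<close> unfolding pc_def by auto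
        then show ?thesis using rs_ne eE by blast
      qed
    next
      case (Pos e)
      have eE: "e \<in> E1" using bl Pos by simp
      show ?thesis
      proof (cases a)
        case (Neg g)
        have g: "g \<in> E1" "r g = r e" "cls C g \<noteq> cls C e" using A(1,3) Pos Neg unfolding pc_def by auto
        define Y where "Y = cls C g"
        have Yv: "Y \<in> Cv r C (r e)" using cls_Cv[OF g(1)] g(2) unfolding Y_def by simp
        have YC: "Y \<in> C" "g \<in> Y" using cls[OF g(1)] unfolding Y_def by auto
        show ?thesis
        proof (cases "2 \<le> card Y")
          case True
          then have "cnode \<beta>" unfolding cnode_def using bg Pos Yv g(3) Y_def by blast
          then show ?thesis using b False by blast
        next
          case c: False
          have "ch \<beta> Y = g" using card1[OF YC(1) c chvD[OF assms(5) YC(1)] YC(2)] .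
          moreover have "Neg (ch (Pos e # \<gamma>) Y) # Pos e # \<gamma> \<in> gen v ch"
            using gen.g_pos[of e \<gamma> v ch Y] b(1) bg Pos Yv g(3) Y_def by simp
          ultimately have "a # \<beta> \<in> gen v ch" using bg Pos Neg by simp
          then show ?thesis using b(2) by (intro disjI2 bexI[of _ "a # \<beta>"]) auto
        qed
      next
        case (Pos f)
        have "f \<in> E1" "s f = r e" using A(1,3) Pos \<open>b = Pos e\<close> unfolding pc_def by auto
        then show ?thesis using rs_ne eE by metis
      qed
    qed
  qed
qed

lemma descent: assumes "\<alpha> \<in> gen v ch" "\<alpha> \<noteq> []" "hd \<alpha> \<notin> Abar" "chv ch"
  shows "\<exists>\<sigma>. \<sigma> # \<alpha> \<in> gen v ch \<and> \<sigma> \<notin> Abar"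
proof -
  obtain \<tau> \<beta> where ab: "\<alpha> = \<tau> # \<beta>" using assms(2) by (cases \<alpha>) auto
  have tl: "\<tau> \<in> letters E1" using gen_reduced[OF assms(1,4)] ab by (simp add: reduced_Cons)
  note cl = Abar_props(1)[unfolded dclosed_def]
  show ?thesis
  proof (cases \<tau>)
    case (Neg e)
    have eE: "e \<in> E1" using tl Neg by simp
    have nA: "Neg e \<notin> Abar" using assms(3) ab Neg by simp
    have c2: "2 \<le> card {f\<in>E1. s f = s e}"
    proof (rule ccontr)
      assume "\<not> 2 \<le> card {f\<in>E1. s f = s e}"
      then have "Neg e \<in> DE" using D2a[OF eE] by blast
      then show False using nA Abar_props(3) by blast
    qed
    have "\<not> Pos ` ({f\<in>E1. s f = s e} - {e}) \<subseteq> Abar"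
    proof
      assume "Pos ` ({f\<in>E1. s f = s e} - {e}) \<subseteq> Abar"
      then have "Neg e \<in> Abar" using cl sE01[OF eE] c2 eE by blast
      then show False using nA by simp
    qed
    then obtain f where f: "f \<in> E1" "s f = s e" "f \<noteq> e" "Pos f \<notin> Abar" by blast
    have "Pos f # \<alpha> \<in> gen v ch" using gen.g_neg[of e \<beta> v ch f] assms(1) ab Neg f by simp
    then show ?thesis using f(4) by blast
  next
    case (Pos e)
    have eE: "e \<in> E1" using tl Pos by simp
    have nA: "Pos e \<notin> Abar" using assms(3) ab Pos by simp
    have c2: "2 \<le> card (Cv r C (r e))"
    proof (rule ccontr)
      assume "\<not> 2 \<le> card (Cv r C (r e))"
      then have "Pos e \<in> DE" using D2b[OF eE] by blast
      then show False using nA Abar_props(3) by blast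
    qed
    have "\<not> (\<forall>Y\<in>Cv r C (r e) - {cls C e}. Neg ` Y \<inter> Abar \<noteq> {})"
    proof
      assume "\<forall>Y\<in>Cv r C (r e) - {cls C e}. Neg ` Y \<inter> Abar \<noteq> {}"
      then have "Pos ` cls C e \<subseteq> Abar" using cl rE00[OF eE] c2 cls_Cv[OF eE] by blast
      then show False using nA cls[OF eE] by blast
    qed
    then obtain Y where Y: "Y \<in> Cv r C (r e)" "Y \<noteq> cls C e" "Neg ` Y \<inter> Abar = {}" by blast
    have "Neg (ch (Pos e # \<beta>) Y) # Pos e # \<beta> \<in> gen v ch"
      using gen.g_pos[of e \<beta> v ch Y] assms(1) ab Pos Y by simp
    moreover have "ch (Pos e # \<beta>) Y \<in> Y" using chvD[OF assms(4) Cv_C[OF Y(1)]] .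
    ultimately show ?thesis using Y(3) ab Pos by blast
  qed
qed

lemma root_bad: assumes "v \<notin> Vset E00 E01 E1 r s C DE" "v \<in> E00 \<union> E01" "chv ch"
  shows "\<exists>\<sigma>. [\<sigma>] \<in> gen v ch \<and> \<sigma> \<notin> Abar"
proof (cases "v \<in> E01")
  case True
  have "\<not> Pos ` {e\<in>E1. s e = v} \<subseteq> Abar" using assms(1) True unfolding Vset_iff by blast
  then obtain f where f: "f \<in> E1" "s f = v" "Pos f \<notin> Abar" by blast
  then show ?thesis using gen.g_root1[OF True f(1,2)] by blast
next
  case False
  then have "v \<in> E00" using assms(2) by blast
  then obtain X where X: "X \<in> Cv r C v" "Neg ` X \<inter> Abar = {}" using assms(1) unfolding Vset_iff by blast
  have "[Neg (ch [] X)] \<in> gen v ch" using gen.g_root0[OF False X(1)] .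
  moreover have "ch [] X \<in> X" using chvD[OF assms(3) Cv_C[OF X(1)]] .
  ultimately show ?thesis using X(2) by blast
qed

lemma deep_bad: assumes "v \<notin> Vset E00 E01 E1 r s C DE" "v \<in> E00 \<union> E01" "chv ch"
  shows "\<exists>\<alpha>\<in>gen v ch. \<alpha> \<noteq> [] \<and> length \<alpha> = Suc n \<and> hd \<alpha> \<notin> Abar"
proof (induction n)
  case 0 then show ?case using root_bad[OF assms] by fastforce
next
  case (Suc n)
  then obtain \<alpha> where a: "\<alpha> \<in> gen v ch" "\<alpha> \<noteq> []" "length \<alpha> = Suc n" "hd \<alpha> \<notin> Abar" by blast
  then obtain \<sigma> where "\<sigma> # \<alpha> \<in> gen v ch" "\<sigma> \<notin> Abar" using descent[OF a(1,2,4) assms(3)] by blast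
  then show ?case using a(3) by (intro bexI[of _ "\<sigma> # \<alpha>"]) auto
qed

lemma deep_cnode: assumes "v \<notin> Vset E00 E01 E1 r s C DE" "v \<in> E00 \<union> E01" "chv ch"
  shows "\<exists>\<beta>\<in>gen v ch. n \<le> length \<beta> \<and> cnode \<beta>"
proof -
  obtain \<alpha> where a: "\<alpha> \<in> gen v ch" "\<alpha> \<noteq> []" "length \<alpha> = Suc n" "hd \<alpha> \<notin> Abar"
    using deep_bad[OF assms] by blast
  have hl: "hd \<alpha> \<in> letters E1" using gen_reduced[OF a(1) assms(3)] a(2) by (cases \<alpha>) (auto simp: reduced_Cons)
  have "hd \<alpha> \<notin> DE" using a(4) Abar_props(3) by blast
  then obtain w where w: "choice_path E1 r s C w" "last w = hd \<alpha>" using DE_iff hl by blast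
  have aw: "adm_word E1 r s C w" using w(1) by (simp add: choice_path_def)
  from follow[OF aw a(1,2) w(2)[symmetric] assms(3)]
  show ?thesis
  proof
    assume "\<exists>\<beta>\<in>gen v ch. length \<alpha> \<le> length \<beta> \<and> cnode \<beta>"
    then obtain \<beta> where "\<beta> \<in> gen v ch" "length \<alpha> \<le> length \<beta>" "cnode \<beta>" by blast
    then show ?thesis using a(3) by (intro bexI[of _ \<beta>]) auto
  next
    assume "\<exists>\<beta>\<in>gen v ch. length \<alpha> \<le> length \<beta> \<and> \<beta> \<noteq> [] \<and> hd \<beta> = hd w"
    then obtain \<beta> where b: "\<beta> \<in> gen v ch" "length \<alpha> \<le> length \<beta>" "\<beta> \<noteq> []" "hd \<beta> = hd w" by blast
    obtain e where e: "e \<in> E1" "hd w = Pos e" "\<exists>X\<in>Cv r C (r e). X \<noteq> cls C e \<and> 2 \<le> card X"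
      using w(1) unfolding choice_path_def by blast
    obtain \<gamma> where "\<beta> = Pos e # \<gamma>" using b(3,4) e(2) by (cases \<beta>) auto
    then have "cnode \<beta>" unfolding cnode_def using e(3) by blast
    then show ?thesis using b(1,2) a(3) by (intro bexI[of _ \<beta>]) auto
  qed
qed

lemma partC: assumes v: "v \<in> E00 \<union> E01" and iso: "\<xi> \<in> OmV v" "openin (subtopology set_top (OmV v)) {\<xi>}"
  shows "v \<in> Vset E00 E01 E1 r s C DE"
proof (rule ccontr)
  assume nV: "v \<notin> Vset E00 E01 E1 r s C DE"
  obtain F where F: "finite F" "\<forall>\<eta>\<in>OmV v. (\<forall>w\<in>F. (w \<in> \<eta>) = (w \<in> \<xi>)) \<longrightarrow> \<eta> = \<xi>"
    using iso(2) unfolding iso_set_top by blast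
  obtain N where N: "\<forall>w\<in>F. length w < N"
  proof -
    have "finite (length ` F)" using F(1) by simp
    then obtain M where "\<forall>x\<in>length ` F. x \<le> M" using finite_nat_set_iff_bounded_le by blast
    then have "\<forall>w\<in>F. length w < Suc M" by auto
    then show ?thesis using that by blast
  qed
  define ch where "ch = ch_of \<xi>"
  have chv: "chv ch" unfolding ch_def by (rule chv_ch_of)
  have xg: "\<xi> = gen v ch" unfolding ch_def using om_gen[OF iso(1) v] .
  obtain \<beta> where b: "\<beta> \<in> gen v ch" "N \<le> length \<beta>" "cnode \<beta>" using deep_cnode[OF nV v chv] by blast
  then obtain e \<gamma> Y where bY: "\<beta> = Pos e # \<gamma>" "Y \<in> Cv r C (r e)" "Y \<noteq> cls C e" "2 \<le> card Y"
    unfolding cnode_def by blast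
  have YC: "Y \<in> C" using Cv_C[OF bY(2)] .
  obtain g where g: "g \<in> Y" "g \<noteq> ch \<beta> Y" using card2[OF YC bY(4) chvD[OF chv YC]] by blast
  define ch' where "ch' = ch(\<beta> := (ch \<beta>)(Y := g))"
  have chv': "chv ch'" unfolding chv_def ch'_def using chvD[OF chv] g(1) by auto
  define \<eta> where "\<eta> = gen v ch'"
  have eV: "\<eta> \<in> OmV v" unfolding \<eta>_def using gen_OmV[OF chv' v] .
  have agr1: "\<forall>\<alpha> Y'. length \<alpha> < length \<beta> \<longrightarrow> ch \<alpha> Y' = ch' \<alpha> Y'" unfolding ch'_def by auto
  have agr2: "\<forall>\<alpha> Y'. length \<alpha> < length \<beta> \<longrightarrow> ch' \<alpha> Y' = ch \<alpha> Y'" unfolding ch'_def by auto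
  have short: "length w \<le> length \<beta> \<Longrightarrow> (w \<in> \<eta>) = (w \<in> \<xi>)" for w
    unfolding \<eta>_def xg using gen_len_agree[OF agr1] gen_len_agree[OF agr2] by blast
  have "\<forall>w\<in>F. (w \<in> \<eta>) = (w \<in> \<xi>)"
  proof
    fix w assume "w \<in> F"
    then have "length w \<le> length \<beta>" using N b(2) by fastforce
    then show "(w \<in> \<eta>) = (w \<in> \<xi>)" using short by blast
  qed
  then have eq: "\<eta> = \<xi>" using F(2) eV by blast
  have "\<beta> \<in> \<eta>" using short[of \<beta>] b(1) xg by simp
  then have "Neg (ch' \<beta> Y) # \<beta> \<in> \<eta>" unfolding \<eta>_def using gen.g_pos[of e \<gamma> v ch' Y] bY by simp
  then have "Neg g # \<beta> \<in> gen v ch" using eq xg unfolding ch'_def by simp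
  then obtain Y' where Y': "Y' \<in> Cv r C (r e)" "Y' \<noteq> cls C e" "Neg g = Neg (ch \<beta> Y')"
    unfolding bY(1) gen_pos_child by blast
  have "g \<in> Y'" using Y'(3) chvD[OF chv Cv_C[OF Y'(1)]] by simp
  then have "Y' = Y" using C_same[OF Cv_C[OF Y'(1)] YC _ g(1)] by simp
  then show False using Y'(3) g(2) by simp
qed

end


lemma topspace_set_top: "topspace set_top = UNIV"
  unfolding set_top_def topspace_pullback_topology topspace_PB by simp

lemma topspace_cantor: "topspace cantor_top = UNIV"
  unfolding cantor_top_def by (rule topspace_PB)

lemma cantor_no_iso: "\<not> openin cantor_top {x}"
proof
  assume "openin cantor_top {x}"
  then have "openin (subtopology cantor_top UNIV) {x}" by simp
  then obtain F where F: "finite F" "\<forall>y\<in>UNIV. (\<forall>i\<in>F. y i = x i) \<longrightarrow> y = x"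
    unfolding iso_cantor by blast
  obtain i where i: "i \<notin> F" using F(1) infinite_UNIV_nat by (metis ex_new_if_finite)
  have "\<forall>j\<in>F. (x(i := \<not> x i)) j = x j" using i by auto
  then have "x(i := \<not> x i) = x" using F(2) by blast
  then show False by (metis fun_upd_same)
qed

lemma homeo_iso: assumes "homeomorphic_map X Y f" "openin X {a}" shows "openin Y {f a}"
proof -
  have "{a} \<subseteq> topspace X" using openin_subset[OF assms(2)] .
  then show ?thesis using homeomorphic_map_openness[OF assms(1), of "{a}"] assms(2) by simp
qed

context G begin

lemma part1: assumes "v \<in> E00 \<union> E01"
  shows "(\<exists>\<xi>\<in>OmV v. openin (subtopology set_top (OmV v)) {\<xi>}) \<longleftrightarrow> v \<in> Vset E00 E01 E1 r s C DE"
  using partA[OF assms] partC[OF assms] by blast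

lemma OmV_sub: "OmV v \<subseteq> Om" unfolding Omega_v_def by auto

lemma Om_cover: assumes "\<xi> \<in> Om" shows "\<exists>v\<in>E00 \<union> E01. \<xi> \<in> OmV v"
proof -
  from om_cond[OF assms om_nil[OF assms]] show ?thesis
  proof
    assume "\<exists>u\<in>E01. xi_at E1 \<xi> [] = Pos ` {e \<in> E1. s e = u}"
    then obtain u where u: "u \<in> E01" "xi_at E1 \<xi> [] = Pos ` {e \<in> E1. s e = u}" by blast
    obtain f where f: "f \<in> E1" "s f = u" using u(1) sE by (metis imageE)
    then have "Pos f \<in> xi_at E1 \<xi> []" using u(2) by blast
    then have "[Pos f] \<in> \<xi>" using om_child_rev by blast
    then have "\<xi> \<in> OmV u" unfolding OmV_iff using assms u(1) f by auto
    then show ?thesis using u(1) by blast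
  next
    assume "\<exists>u\<in>E00. \<exists>f. (\<forall>X\<in>Cv r C u. f X \<in> X) \<and> xi_at E1 \<xi> [] = {Neg (f X) |X. X \<in> Cv r C u}"
    then obtain u f where u: "u \<in> E00" "\<forall>X\<in>Cv r C u. f X \<in> X" "xi_at E1 \<xi> [] = {Neg (f X) |X. X \<in> Cv r C u}"
      by blast
    obtain e where e: "e \<in> E1" "r e = u" using u(1) rE by (metis imageE)
    have X: "cls C e \<in> Cv r C u" using cls_Cv[OF e(1)] e(2) by simp
    then have "Neg (f (cls C e)) \<in> xi_at E1 \<xi> []" using u(3) by blast
    then have m: "[Neg (f (cls C e))] \<in> \<xi>" using om_child_rev by blast
    have nu: "u \<notin> E01" using u(1) disj by blast
    have "\<xi> \<in> OmV u" unfolding OmV_iff using assms nu X m u(2) by auto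
    then show ?thesis using u(1) by blast
  qed
qed

lemma iso_Om_V: assumes "\<xi> \<in> OmV v" "openin (subtopology set_top Om) {\<xi>}"
  shows "openin (subtopology set_top (OmV v)) {\<xi>}"
proof -
  obtain F where F: "finite F" "\<forall>\<eta>\<in>Om. (\<forall>w\<in>F. (w \<in> \<eta>) = (w \<in> \<xi>)) \<longrightarrow> \<eta> = \<xi>"
    using assms(2) unfolding iso_set_top by blast
  have "\<forall>\<eta>\<in>OmV v. (\<forall>w\<in>F. (w \<in> \<eta>) = (w \<in> \<xi>)) \<longrightarrow> \<eta> = \<xi>"
  proof (intro ballI impI)
    fix \<eta> assume "\<eta> \<in> OmV v" "\<forall>w\<in>F. (w \<in> \<eta>) = (w \<in> \<xi>)"
    then show "\<eta> = \<xi>" using F(2) OmV_sub by blast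
  qed
  then show ?thesis unfolding iso_set_top using assms(1) F(1) by blast
qed

lemma iso_V_Om: assumes "openin (subtopology set_top (OmV v)) {\<xi>}"
  shows "openin (subtopology set_top Om) {\<xi>}"
proof -
  obtain F where F: "\<xi> \<in> OmV v" "finite F" "\<forall>\<eta>\<in>OmV v. (\<forall>w\<in>F. (w \<in> \<eta>) = (w \<in> \<xi>)) \<longrightarrow> \<eta> = \<xi>"
    using assms unfolding iso_set_top by blast
  define F' where "F' = F \<union> (\<lambda>\<sigma>. [\<sigma>]) ` letters E1"
  have fF': "finite F'" unfolding F'_def using F(2) letters_finite[OF finE1] by simp
  have "\<forall>\<eta>\<in>Om. (\<forall>w\<in>F'. (w \<in> \<eta>) = (w \<in> \<xi>)) \<longrightarrow> \<eta> = \<xi>"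
  proof (intro ballI impI)
    fix \<eta> assume e: "\<eta> \<in> Om" "\<forall>w\<in>F'. (w \<in> \<eta>) = (w \<in> \<xi>)"
    have s1: "[Pos e] \<in> \<eta> \<longleftrightarrow> [Pos e] \<in> \<xi>" if "e \<in> E1" for e
    proof -
      have "[Pos e] \<in> F'" unfolding F'_def using that by simp
      then show ?thesis using e(2) by blast
    qed
    have s2: "[Neg e] \<in> \<eta> \<longleftrightarrow> [Neg e] \<in> \<xi>" if "e \<in> E1" for e
    proof -
      have "[Neg e] \<in> F'" unfolding F'_def using that by simp
      then show ?thesis using e(2) by blast
    qed
    have "\<eta> \<in> OmV v"
    proof (cases "v \<in> E01")
      case True
      then obtain f where "f \<in> E1" "s f = v" "[Pos f] \<in> \<xi>" using F(1) unfolding OmV_iff by auto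
      then show ?thesis unfolding OmV_iff using e(1) True s1 by (metis (mono_tags, lifting))
    next
      case False
      then obtain X f where X: "X \<in> Cv r C v" "f \<in> X" "[Neg f] \<in> \<xi>" using F(1) unfolding OmV_iff by auto
      have "f \<in> E1" using Cv_mem[OF X(1,2)] by simp
      then have "[Neg f] \<in> \<eta>" using s2 X(3) by simp
      then show ?thesis unfolding OmV_iff using e(1) False X(1,2) by (metis (mono_tags, lifting))
    qed
    moreover have "\<forall>w\<in>F. (w \<in> \<eta>) = (w \<in> \<xi>)" using e(2) unfolding F'_def by blast
    ultimately show "\<eta> = \<xi>" using F(3) by blast
  qed
  moreover have "\<xi> \<in> Om" using F(1) OmV_sub by blast
  ultimately show ?thesis unfolding iso_set_top using fF' by blast
qed

lemma Om_no_iso: assumes "Vset E00 E01 E1 r s C DE = {}" "\<xi> \<in> Om"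
  shows "\<not> openin (subtopology set_top Om) {\<xi>}"
proof
  assume o: "openin (subtopology set_top Om) {\<xi>}"
  obtain v where v: "v \<in> E00 \<union> E01" "\<xi> \<in> OmV v" using Om_cover[OF assms(2)] by blast
  have "openin (subtopology set_top (OmV v)) {\<xi>}" using iso_Om_V[OF v(2) o] .
  then have "v \<in> Vset E00 E01 E1 r s C DE" using part1[OF v(1)] v(2) by blast
  then show False using assms(1) by simp
qed

lemma om_closed: assumes "\<xi> \<subseteq> Fgrp E1" "\<And>F. finite F \<Longrightarrow> \<exists>\<eta>\<in>Om. \<forall>w\<in>F. (w \<in> \<eta>) = (w \<in> \<xi>)"
  shows "\<xi> \<in> Om"
  unfolding Omega_def
proof (intro CollectI conjI ballI allI)
  show "\<xi> \<subseteq> Fgrp E1" by fact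
  obtain \<eta> where "\<eta> \<in> Om" "\<forall>w\<in>{[]}. (w \<in> \<eta>) = (w \<in> \<xi>)" using assms(2)[of "{[]}"] by blast
  then show "[] \<in> \<xi>" using om_nil by blast
next
  fix \<alpha> k assume a: "\<alpha> \<in> \<xi>"
  obtain \<eta> where e: "\<eta> \<in> Om" "\<forall>w\<in>{\<alpha>, drop k \<alpha>}. (w \<in> \<eta>) = (w \<in> \<xi>)" using assms(2)[of "{\<alpha>, drop k \<alpha>}"] by blast
  then have "\<alpha> \<in> \<eta>" using a by simp
  then have "drop k \<alpha> \<in> \<eta>" using om_drop[OF e(1)] by blast
  then show "drop k \<alpha> \<in> \<xi>" using e(2) by simp
next
  fix \<alpha> assume a: "\<alpha> \<in> \<xi>"
  define F where "F = insert \<alpha> ((\<lambda>\<sigma>. gmult \<sigma> \<alpha>) ` letters E1)"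
  have "finite F" unfolding F_def using letters_finite[OF finE1] by simp
  then obtain \<eta> where e: "\<eta> \<in> Om" "\<forall>w\<in>F. (w \<in> \<eta>) = (w \<in> \<xi>)" using assms(2) by blast
  have a': "\<alpha> \<in> \<eta>" using e(2) a unfolding F_def by simp
  have "xi_at E1 \<eta> \<alpha> = xi_at E1 \<xi> \<alpha>"
  proof (rule set_eqI)
    fix \<sigma>
    show "\<sigma> \<in> xi_at E1 \<eta> \<alpha> \<longleftrightarrow> \<sigma> \<in> xi_at E1 \<xi> \<alpha>"
      unfolding xi_at_iff using e(2) unfolding F_def by blast
  qed
  then show "(\<exists>v\<in>E01. xi_at E1 \<xi> \<alpha> = Pos ` {e \<in> E1. s e = v}) \<or>
        (\<exists>v\<in>E00. \<exists>f. (\<forall>X\<in>Cv r C v. f X \<in> X) \<and> xi_at E1 \<xi> \<alpha> = {Neg (f X) |X. X \<in> Cv r C v})"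
    using om_cond[OF e(1) a'] by simp
qed

end


lemma reduced_rep: "reduced E1 (replicate n (Pos e))" if "e \<in> E1"
proof (induction n)
  case (Suc n) then show ?case using that by (cases n) (auto simp: reduced_Cons)
qed simp

context G begin

definition enum :: "nat \<Rightarrow> 'e letter list" where "enum = from_nat_into (Fgrp E1)"
definition idx :: "'e letter list \<Rightarrow> nat" where "idx = inv_into UNIV enum"

lemma Fgrp_countable: "countable (Fgrp E1)"
proof -
  have "Fgrp E1 \<subseteq> lists (letters E1)" unfolding Fgrp_def reduced_def by auto
  moreover have "countable (lists (letters E1))"
    using countable_finite[OF letters_finite[OF finE1]] by simp
  ultimately show ?thesis using countable_subset by blast
qed

lemma Fgrp_infinite: assumes "E1 \<noteq> {}" shows "infinite (Fgrp E1)"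
proof
  assume fin: "finite (Fgrp E1)"
  obtain e where e: "e \<in> E1" using assms by blast
  have "range (\<lambda>n. replicate n (Pos e)) \<subseteq> Fgrp E1" unfolding Fgrp_def using reduced_rep[OF e] by auto
  then have "finite (range (\<lambda>n. replicate n (Pos e)))" using fin finite_subset by blast
  moreover have "inj (\<lambda>n. replicate n (Pos e))" by (rule injI) (metis length_replicate)
  ultimately have "finite (UNIV :: nat set)" using finite_imageD by blast
  then show False by simp
qed

context
  assumes ne: "E1 \<noteq> {}"
begin

lemma enum_bij: "bij_betw enum UNIV (Fgrp E1)"
  unfolding enum_def using bij_betw_from_nat_into[OF Fgrp_countable Fgrp_infinite[OF ne]] .

lemma enum_in: "enum i \<in> Fgrp E1" using bij_betw_apply[OF enum_bij UNIV_I] .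
lemma enum_inj: "inj enum" using bij_betw_imp_inj_on[OF enum_bij] .
lemma enum_idx: "w \<in> Fgrp E1 \<Longrightarrow> enum (idx w) = w"
  unfolding idx_def by (rule bij_betw_inv_into_right[OF enum_bij])
lemma idx_enum: "idx (enum i) = i"
  unfolding idx_def using inv_into_f_f[OF enum_inj] by simp

definition chi :: "'e letter list set \<Rightarrow> nat \<Rightarrow> bool" where "chi \<xi> = (\<lambda>i. enum i \<in> \<xi>)"
definition psi :: "(nat \<Rightarrow> bool) \<Rightarrow> 'e letter list set" where "psi x = enum ` {i. x i}"

lemma mem_psi: "w \<in> psi x \<longleftrightarrow> w \<in> Fgrp E1 \<and> x (idx w)"
proof
  assume "w \<in> psi x"
  then obtain i where "x i" "w = enum i" unfolding psi_def by blast
  then show "w \<in> Fgrp E1 \<and> x (idx w)" using enum_in idx_enum by simp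
next
  assume "w \<in> Fgrp E1 \<and> x (idx w)"
  then have "enum (idx w) = w" "idx w \<in> {i. x i}" using enum_idx by auto
  then show "w \<in> psi x" unfolding psi_def by (metis image_eqI)
qed

lemma psi_chi: assumes "\<xi> \<subseteq> Fgrp E1" shows "psi (chi \<xi>) = \<xi>"
proof (rule set_eqI)
  fix w
  show "w \<in> psi (chi \<xi>) \<longleftrightarrow> w \<in> \<xi>"
  proof (cases "w \<in> Fgrp E1")
    case True then show ?thesis by (simp add: mem_psi chi_def enum_idx)
  next
    case False then show ?thesis using assms mem_psi by blast
  qed
qed

lemma chi_psi: "chi (psi x) = x"
proof
  fix i show "chi (psi x) i = x i" unfolding chi_def mem_psi using enum_in idx_enum by simp
qed

lemma Om_Fgrp: "\<xi> \<in> Om \<Longrightarrow> \<xi> \<subseteq> Fgrp E1"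
  unfolding Omega_def by blast

lemma chi_cont: "continuous_map set_top cantor_top chi"
  unfolding cantor_top_def continuous_map_componentwise_UNIV
proof
  fix i
  have eq: "(\<lambda>\<xi>. chi \<xi> i) = (\<lambda>z. z (enum i)) \<circ> (\<lambda>\<xi> w. w \<in> \<xi>)" by (auto simp: chi_def)
  have "continuous_map (pullback_topology UNIV (\<lambda>\<xi> w. w \<in> \<xi>) PB) (discrete_topology UNIV)
          ((\<lambda>z. z (enum i)) \<circ> (\<lambda>\<xi> w. w \<in> \<xi>))"
    by (rule continuous_map_pullback) (rule continuous_map_product_projection, simp)
  then show "continuous_map set_top (discrete_topology UNIV) (\<lambda>\<xi>. chi \<xi> i)"
    unfolding set_top_def eq .
qed

lemma psi_cont: "continuous_map cantor_top set_top psi"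
  unfolding set_top_def
proof (rule continuous_map_pullback')
  show "topspace cantor_top \<subseteq> psi -` UNIV" by simp
  show "continuous_map cantor_top PB ((\<lambda>\<xi> w. w \<in> \<xi>) \<circ> psi)"
    unfolding cantor_top_def continuous_map_componentwise_UNIV
  proof
    fix w
    show "continuous_map PB (discrete_topology UNIV) (\<lambda>x. ((\<lambda>\<xi> w. w \<in> \<xi>) \<circ> psi) x w)"
      by (rule cont_finite_dep[of "{idx w}"]) (auto simp: mem_psi)
  qed
qed

lemma Om_nonempty: "\<exists>\<xi>. \<xi> \<in> Om"
proof -
  obtain e where e: "e \<in> E1" using ne by blast
  have "s e \<in> E00 \<union> E01" using sE01[OF e] by simp
  then show ?thesis using gen_Omega[OF chv_ch0] by blast
qed

lemma cset_K: assumes V: "Vset E00 E01 E1 r s C DE = {}" and x0: "\<xi>0 \<in> Om"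
  shows "cset (chi ` Om) (chi \<xi>0)"
proof
  show "chi \<xi>0 \<in> chi ` Om" using x0 by blast
next
  fix x assume H: "\<And>n. \<exists>y\<in>chi ` Om. agree n y x"
  have "psi x \<in> Om"
  proof (rule om_closed)
    show "psi x \<subseteq> Fgrp E1" using mem_psi by blast
    fix F :: "'e letter list set" assume fF: "finite F"
    have "finite (idx ` (F \<inter> Fgrp E1))" using fF by simp
    then obtain m where m: "\<forall>j\<in>idx ` (F \<inter> Fgrp E1). j \<le> m" using finite_nat_set_iff_bounded_le by blast
    obtain y where y: "y \<in> chi ` Om" "agree (Suc m) y x" using H by blast
    then obtain \<eta> where e: "\<eta> \<in> Om" "y = chi \<eta>" by blast
    have "\<forall>w\<in>F. (w \<in> \<eta>) = (w \<in> psi x)"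
    proof
      fix w assume w: "w \<in> F"
      show "(w \<in> \<eta>) = (w \<in> psi x)"
      proof (cases "w \<in> Fgrp E1")
        case True
        then have "idx w \<in> idx ` (F \<inter> Fgrp E1)" using w by blast
        then have "idx w < Suc m" using m by (metis le_imp_less_Suc)
        then have "y (idx w) = x (idx w)" using y(2) unfolding agree_def by blast
        then show ?thesis using True e(2) enum_idx[OF True] unfolding chi_def mem_psi by simp
      next
        case False
        then show ?thesis using Om_Fgrp[OF e(1)] mem_psi by blast
      qed
    qed
    then show "\<exists>\<eta>\<in>Om. \<forall>w\<in>F. (w \<in> \<eta>) = (w \<in> psi x)" using e(1) by blast
  qed
  then show "x \<in> chi ` Om" using chi_psi[of x] by (metis image_eqI)
next
  fix x n assume "x \<in> chi ` Om"
  then obtain \<xi> where x: "\<xi> \<in> Om" "x = chi \<xi>" by blast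
  have "\<not> openin (subtopology set_top Om) {\<xi>}" using Om_no_iso[OF V x(1)] .
  then have "\<not> (\<forall>\<eta>\<in>Om. (\<forall>w\<in>enum ` {..<n}. (w \<in> \<eta>) = (w \<in> \<xi>)) \<longrightarrow> \<eta> = \<xi>)"
    unfolding iso_set_top using x(1) by blast
  then obtain \<eta> where e: "\<eta> \<in> Om" "\<forall>w\<in>enum ` {..<n}. (w \<in> \<eta>) = (w \<in> \<xi>)" "\<eta> \<noteq> \<xi>" by blast
  have "chi \<eta> \<noteq> x"
  proof
    assume "chi \<eta> = x"
    then have "psi (chi \<eta>) = psi (chi \<xi>)" using x(2) by simp
    then show False using psi_chi[OF Om_Fgrp[OF e(1)]] psi_chi[OF Om_Fgrp[OF x(1)]] e(3) by simp
  qed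
  moreover have "agree n (chi \<eta>) x" unfolding agree_def chi_def x(2) using e(2) by auto
  ultimately show "\<exists>y\<in>chi ` Om. y \<noteq> x \<and> agree n y x" using e(1) by blast
qed

lemma Om_homeo_K: "homeomorphic_maps (subtopology set_top Om) (subtopology cantor_top (chi ` Om)) chi psi"
  unfolding homeomorphic_maps_def
proof (intro conjI)
  show "continuous_map (subtopology set_top Om) (subtopology cantor_top (chi ` Om)) chi"
    unfolding continuous_map_in_subtopology
    using continuous_map_from_subtopology[OF chi_cont] by auto
  show "continuous_map (subtopology cantor_top (chi ` Om)) (subtopology set_top Om) psi"
    unfolding continuous_map_in_subtopology
    using continuous_map_from_subtopology[OF psi_cont] psi_chi Om_Fgrp by auto
  show "\<forall>x\<in>topspace (subtopology set_top Om). psi (chi x) = x"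
    using psi_chi Om_Fgrp by auto
  show "\<forall>y\<in>topspace (subtopology cantor_top (chi ` Om)). chi (psi y) = y"
    using chi_psi by auto
qed

lemma cantor_dir: assumes V: "Vset E00 E01 E1 r s C DE = {}"
  shows "subtopology set_top Om homeomorphic_space cantor_top"
proof -
  obtain \<xi>0 where x0: "\<xi>0 \<in> Om" using Om_nonempty by blast
  have "subtopology set_top Om homeomorphic_space subtopology cantor_top (chi ` Om)"
    using Om_homeo_K homeomorphic_maps_imp_homeomorphic_space by blast
  also have "subtopology cantor_top (chi ` Om) homeomorphic_space cantor_top"
    using cset.cset_homeo[OF cset_K[OF V x0]] .
  finally show ?thesis .
qed

end

lemma noncantor_dir: assumes "v \<in> Vset E00 E01 E1 r s C DE"
  shows "\<not> (subtopology set_top Om homeomorphic_space cantor_top)"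
proof
  assume "subtopology set_top Om homeomorphic_space cantor_top"
  then obtain f where f: "homeomorphic_map (subtopology set_top Om) cantor_top f"
    unfolding homeomorphic_space by blast
  have v: "v \<in> E00 \<union> E01" using assms unfolding Vset_def by blast
  obtain \<xi> where "\<xi> \<in> OmV v" "openin (subtopology set_top (OmV v)) {\<xi>}" using part1[OF v] assms by blast
  then have "openin (subtopology set_top Om) {\<xi>}" using iso_V_Om by blast
  then have "openin cantor_top {f \<xi>}" using homeo_iso[OF f] by blast
  then show False using cantor_no_iso by blast
qed

end

theorem proposition9:
  fixes E00 E01 :: "'v set" and E1 :: "'e set" and r s :: "'e \<Rightarrow> 'v" and C :: "'e set set"
  assumes "fin_bip_sep_graph E00 E01 E1 r s C"
  shows "(\<forall>v \<in> E00 \<union> E01.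
            (\<exists>\<xi>\<in>Omega_v E00 E01 E1 r s C v.
                openin (subtopology set_top (Omega_v E00 E01 E1 r s C v)) {\<xi>})
            \<longleftrightarrow> v \<in> Vset E00 E01 E1 r s C (dead_ends E1 r s C))
       \<and> (E1 \<noteq> {} \<longrightarrow>
            ((subtopology set_top (Omega E00 E01 E1 r s C) homeomorphic_space cantor_top)
             \<longleftrightarrow> Vset E00 E01 E1 r s C (dead_ends E1 r s C) = {}))"
proof -
  interpret G E00 E01 E1 r s C using assms by (rule G.intro)
  show ?thesis
  proof (intro conjI ballI impI)
    fix v assume "v \<in> E00 \<union> E01"
    then show "(\<exists>\<xi>\<in>Omega_v E00 E01 E1 r s C v.
                openin (subtopology set_top (Omega_v E00 E01 E1 r s C v)) {\<xi>})
            \<longleftrightarrow> v \<in> Vset E00 E01 E1 r s C (dead_ends E1 r s C)" by (rule part1)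
  next
    assume ne: "E1 \<noteq> {}"
    show "(subtopology set_top (Omega E00 E01 E1 r s C) homeomorphic_space cantor_top)
             \<longleftrightarrow> Vset E00 E01 E1 r s C (dead_ends E1 r s C) = {}"
      using cantor_dir[OF ne] noncantor_dir by blast
  qed
qed


end
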